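(* Let $G$ be a connected graph that is not complete and let $K\subseteq V(G)$ be a nonempty set of universal vertices of $G$. Let $G_K$ be the graph obtained from $G$ by adding a new vertex $x$ with $N_{G_K}(x)=K$. Then $\chi(\mathcal{R}(G_K))=\chi(\mathcal{R}(G))$.
   Context: For a connected graph $G$, a search tree on $G$ is a rooted tree with vertex set $V(G)$ defined recursively: its root is some vertex $r\in V(G)$, and the children of $r$ are the roots of search trees on the connected components of $G-r$. For a rooted tree $T$ and $w\in V(T)$, $T|w$ denotes the subtree rooted at $w$. Let $T$ be a search tree on $G$, let $v$ be a child of $u$ in $T$, and let $p$ be the parent of $u$ (if it exists). The $uv$-rotation transforms $T$ into the search tree $T'$ in which: $u$ is a child of $v$ and $v$ is a child of $p$ (or $v$ is the root if $u$ was the root); every subtree of $u$ in $T$ other than $T|v$ is a subtree of $u$ in $T'$; and every subtree $S$ of $v$ in $T$ is a subtree of $u$ in $T'$ if $u$ is adjacent in $G$ to some vertex of $S$, and a subtree of $v$ in $T'$ otherwise. The rotation graph $\mathcal{R}(G)$ is the graph whose vertices are the search trees on $G$, two being adjacent iff they differ by one rotation. $\chi$ denotes chromatic number. A vertex is universal if it is adjacent to all other vertices. *)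

theory Defs
  imports Main
begin

definition simple_graph :: "'a set \<Rightarrow> ('a \<Rightarrow> 'a \<Rightarrow> bool) \<Rightarrow> bool" where
  "simple_graph V E \<longleftrightarrow> finite V \<and> (\<forall>a b. E a b \<longrightarrow> a \<in> V \<and> b \<in> V \<and> a \<noteq> b \<and> E b a)"

definition induced_edges :: "('a \<Rightarrow> 'a \<Rightarrow> bool) \<Rightarrow> 'a set \<Rightarrow> ('a \<times> 'a) set" where
  "induced_edges E S = {(a, b). a \<in> S \<and> b \<in> S \<and> E a b}"

definition connected_on :: "('a \<Rightarrow> 'a \<Rightarrow> bool) \<Rightarrow> 'a set \<Rightarrow> bool" where
  "connected_on E S \<longleftrightarrow> S \<noteq> {} \<and> (\<forall>a\<in>S. \<forall>b\<in>S. (a, b) \<in> (induced_edges E S)\<^sup>*)"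

definition components :: "('a \<Rightarrow> 'a \<Rightarrow> bool) \<Rightarrow> 'a set \<Rightarrow> 'a set set" where
  "components E S = {{b \<in> S. (a, b) \<in> (induced_edges E S)\<^sup>*} | a. a \<in> S}"

definition universal :: "'a set \<Rightarrow> ('a \<Rightarrow> 'a \<Rightarrow> bool) \<Rightarrow> 'a \<Rightarrow> bool" where
  "universal V E v \<longleftrightarrow> v \<in> V \<and> (\<forall>w\<in>V. w \<noteq> v \<longrightarrow> E v w)"

definition complete_graph :: "'a set \<Rightarrow> ('a \<Rightarrow> 'a \<Rightarrow> bool) \<Rightarrow> bool" where
  "complete_graph V E \<longleftrightarrow> (\<forall>a\<in>V. \<forall>b\<in>V. a \<noteq> b \<longrightarrow> E a b)"

text \<open>A rooted tree on a vertex set S is represented by its parent function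
  t :: 'a => 'a option: t x = Some p means p is the parent of x; t x = None
  for the root and for all vertices outside S.\<close>

inductive search_tree :: "('a \<Rightarrow> 'a \<Rightarrow> bool) \<Rightarrow> 'a set \<Rightarrow> ('a \<Rightarrow> 'a option) \<Rightarrow> bool"
  for E where
  "\<lbrakk> connected_on E S; r \<in> S; t r = None; \<forall>x. x \<notin> S \<longrightarrow> t x = None;
     \<forall>C \<in> components E (S - {r}). \<exists>c\<in>C. t c = Some r \<and>
        search_tree E C (\<lambda>x. if x \<in> C \<and> x \<noteq> c then t x else None) \<rbrakk>
   \<Longrightarrow> search_tree E S t"

definition subtree :: "('a \<Rightarrow> 'a option) \<Rightarrow> 'a \<Rightarrow> 'a set" where
  "subtree t w = {y. (y, w) \<in> {(a, b). t a = Some b}\<^sup>*}"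

text \<open>The uv-rotation, where v is a child of u (t v = Some u): u becomes a
  child of v, v takes the former parent of u (or becomes the root), the children
  w of v whose subtree contains a neighbour of u become children of u, and
  everything else is unchanged.\<close>
definition rotate :: "('a \<Rightarrow> 'a \<Rightarrow> bool) \<Rightarrow> ('a \<Rightarrow> 'a option) \<Rightarrow> 'a \<Rightarrow> 'a \<Rightarrow> ('a \<Rightarrow> 'a option)" where
  "rotate E t u v = (\<lambda>x.
     if x = u then Some v
     else if x = v then t u
     else if t x = Some v \<and> (\<exists>y \<in> subtree t x. E u y) then Some u
     else t x)"

definition rot_adj :: "('a \<Rightarrow> 'a \<Rightarrow> bool) \<Rightarrow> ('a \<Rightarrow> 'a option) \<Rightarrow> ('a \<Rightarrow> 'a option) \<Rightarrow> bool" where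
  "rot_adj E t t' \<longleftrightarrow>
     (\<exists>u v. t v = Some u \<and> t' = rotate E t u v) \<or> (\<exists>u v. t' v = Some u \<and> t = rotate E t' u v)"

definition chromatic_number :: "'b set \<Rightarrow> ('b \<Rightarrow> 'b \<Rightarrow> bool) \<Rightarrow> nat" where
  "chromatic_number W A = (LEAST k. \<exists>f. (\<forall>x\<in>W. f x < k) \<and>
      (\<forall>x\<in>W. \<forall>y\<in>W. A x y \<longrightarrow> f x \<noteq> (f y :: nat)))"

definition chi_rotation_graph :: "'a set \<Rightarrow> ('a \<Rightarrow> 'a \<Rightarrow> bool) \<Rightarrow> nat" where
  "chi_rotation_graph V E = chromatic_number {t. search_tree E V t} (rot_adj E)"

definition add_vertex_edges :: "('a \<Rightarrow> 'a \<Rightarrow> bool) \<Rightarrow> 'a \<Rightarrow> 'a set \<Rightarrow> 'a \<Rightarrow> 'a \<Rightarrow> bool" where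
  "add_vertex_edges E x K = (\<lambda>a b. E a b \<or> (a = x \<and> b \<in> K) \<or> (b = x \<and> a \<in> K))"

end

theory Submission
  imports Defs
begin

definition symg :: "('a \<Rightarrow> 'a \<Rightarrow> bool) \<Rightarrow> bool" where
  "symg E \<longleftrightarrow> (\<forall>a b. E a b \<longrightarrow> E b a)"

abbreviation ie where "ie \<equiv> induced_edges"

lemma ie_iff[simp]: "(a, b) \<in> induced_edges E A \<longleftrightarrow> a \<in> A \<and> b \<in> A \<and> E a b"
  by (simp add: induced_edges_def)

lemma ie_mono: "A \<subseteq> B \<Longrightarrow> induced_edges E A \<subseteq> induced_edges E B"
  by auto

lemma rt_ie_mono: "A \<subseteq> B \<Longrightarrow> (a, b) \<in> (induced_edges E A)\<^sup>* \<Longrightarrow> (a, b) \<in> (induced_edges E B)\<^sup>*"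
  using rtrancl_mono[OF ie_mono] by blast

lemma rt_in: "(a, b) \<in> (induced_edges E A)\<^sup>* \<Longrightarrow> a \<in> A \<Longrightarrow> b \<in> A"
  by (induction rule: rtrancl_induct) auto

lemma rt_sym: "symg E \<Longrightarrow> (a, b) \<in> (induced_edges E A)\<^sup>* \<Longrightarrow> (b, a) \<in> (induced_edges E A)\<^sup>*"
proof -
  assume s: "symg E" and h: "(a, b) \<in> (induced_edges E A)\<^sup>*"
  have "sym (induced_edges E A)" using s unfolding symg_def sym_def by auto
  then have "sym ((induced_edges E A)\<^sup>*)" by (rule sym_rtrancl)
  then show ?thesis using h by (auto dest: symD)
qed

lemma comp_iff: "C \<in> components E A \<longleftrightarrow> (\<exists>a\<in>A. C = {b\<in>A. (a, b) \<in> (induced_edges E A)\<^sup>*})"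
  by (auto simp: components_def)

lemma comp_sub: "C \<in> components E A \<Longrightarrow> C \<subseteq> A"
  by (auto simp: comp_iff)

lemma comp_ne: "C \<in> components E A \<Longrightarrow> C \<noteq> {}"
  by (auto simp: comp_iff)

lemma comp_mem: "a \<in> A \<Longrightarrow> {b\<in>A. (a, b) \<in> (induced_edges E A)\<^sup>*} \<in> components E A"
  by (auto simp: comp_iff)

lemma comp_ex: "a \<in> A \<Longrightarrow> \<exists>C\<in>components E A. a \<in> C"
  by (rule bexI[OF _ comp_mem[of a A E]]) auto

lemma comp_eq: "symg E \<Longrightarrow> C \<in> components E A \<Longrightarrow> a \<in> C \<Longrightarrow> C = {b\<in>A. (a, b) \<in> (induced_edges E A)\<^sup>*}"
proof -
  assume s: "symg E" and C: "C \<in> components E A" and a: "a \<in> C"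
  obtain a0 where a0: "a0 \<in> A" "C = {b\<in>A. (a0, b) \<in> (induced_edges E A)\<^sup>*}" using C by (auto simp: comp_iff)
  have "(a0, a) \<in> (induced_edges E A)\<^sup>*" using a a0 by auto
  then have "(a, a0) \<in> (induced_edges E A)\<^sup>*" using rt_sym[OF s] by blast
  show ?thesis
  proof (rule set_eqI, rule iffI)
    fix b assume "b \<in> C"
    then show "b \<in> {b\<in>A. (a, b) \<in> (induced_edges E A)\<^sup>*}"
      using a0 \<open>(a, a0) \<in> _\<close> by (auto intro: rtrancl_trans)
  next
    fix b assume "b \<in> {b\<in>A. (a, b) \<in> (induced_edges E A)\<^sup>*}"
    then show "b \<in> C" using a0 \<open>(a0, a) \<in> _\<close> by (auto intro: rtrancl_trans)
  qed
qed

lemma comp_disj: "symg E \<Longrightarrow> C \<in> components E A \<Longrightarrow> D \<in> components E A \<Longrightarrow> a \<in> C \<Longrightarrow> a \<in> D \<Longrightarrow> C = D"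
proof -
  assume s: "symg E" and C: "C \<in> components E A" and D: "D \<in> components E A" and a: "a \<in> C" "a \<in> D"
  show "C = D" using comp_eq[OF s C a(1)] comp_eq[OF s D a(2)] by simp
qed

lemma comp_closed: "symg E \<Longrightarrow> C \<in> components E A \<Longrightarrow> a \<in> C \<Longrightarrow> b \<in> A \<Longrightarrow> E a b \<Longrightarrow> b \<in> C"
proof -
  assume s: "symg E" and C: "C \<in> components E A" and a: "a \<in> C" and b: "b \<in> A" and e: "E a b"
  have eq: "C = {b\<in>A. (a, b) \<in> (induced_edges E A)\<^sup>*}" using comp_eq[OF s C a] .
  have "a \<in> A" using comp_sub[OF C] a by auto
  then have "(a, b) \<in> (induced_edges E A)\<^sup>*" using b e by auto
  then show ?thesis using eq b by auto
qed

lemma path_stays: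
  assumes "(a, b) \<in> (induced_edges E A)\<^sup>*" "a \<in> C" "C \<subseteq> A" "\<forall>p\<in>C. \<forall>q\<in>A. E p q \<longrightarrow> q \<in> C"
  shows "(a, b) \<in> (induced_edges E C)\<^sup>* \<and> b \<in> C"
  using assms(1)
proof (induction rule: rtrancl_induct)
  case base then show ?case using assms by auto
next
  case (step y z)
  then have "z \<in> C" using assms(4) by auto
  then show ?case using step by (auto intro: rtrancl_into_rtrancl)
qed

lemma path_exit:
  assumes "(a, b) \<in> (induced_edges E A)\<^sup>*" "a \<in> B" "b \<notin> B"
  shows "\<exists>p q. p \<in> B \<and> q \<notin> B \<and> p \<in> A \<and> q \<in> A \<and> E p q"
  using assms
proof (induction rule: rtrancl_induct)
  case base then show ?case by auto
next
  case (step y z)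
  show ?case
  proof (cases "y \<in> B")
    case True then show ?thesis using step by auto
  next
    case False then show ?thesis using step by auto
  qed
qed

lemma comp_conn: "symg E \<Longrightarrow> C \<in> components E A \<Longrightarrow> connected_on E C"
proof -
  assume s: "symg E" and C: "C \<in> components E A"
  have cl: "\<forall>p\<in>C. \<forall>q\<in>A. E p q \<longrightarrow> q \<in> C" using comp_closed[OF s C] by blast
  have "\<forall>a\<in>C. \<forall>b\<in>C. (a, b) \<in> (induced_edges E C)\<^sup>*"
  proof (intro ballI)
    fix a b assume a: "a \<in> C" and b: "b \<in> C"
    have "(a, b) \<in> (induced_edges E A)\<^sup>*" using comp_eq[OF s C a] b by auto
    then show "(a, b) \<in> (induced_edges E C)\<^sup>*" using path_stays[OF _ a comp_sub[OF C] cl] by blast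
  qed
  then show ?thesis using comp_ne[OF C] by (simp add: connected_on_def)
qed

lemma comp_char:
  assumes s: "symg E" and sub: "C \<subseteq> A" and cc: "connected_on E C" and cl: "\<forall>p\<in>C. \<forall>q\<in>A. E p q \<longrightarrow> q \<in> C"
  shows "C \<in> components E A"
proof -
  obtain c where c: "c \<in> C" using cc by (auto simp: connected_on_def)
  have "C = {b\<in>A. (c, b) \<in> (induced_edges E A)\<^sup>*}"
  proof (rule set_eqI, rule iffI)
    fix b assume b: "b \<in> C"
    then have "(c, b) \<in> (induced_edges E C)\<^sup>*" using cc c by (auto simp: connected_on_def)
    then show "b \<in> {b\<in>A. (c, b) \<in> (induced_edges E A)\<^sup>*}" using b sub rt_ie_mono[OF sub] by auto
  next
    fix b assume "b \<in> {b\<in>A. (c, b) \<in> (induced_edges E A)\<^sup>*}"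
    then show "b \<in> C" using path_stays[OF _ c sub cl] by auto
  qed
  then show ?thesis using c sub comp_mem[of c A E] by auto
qed

lemma comps_single: "symg E \<Longrightarrow> connected_on E A \<Longrightarrow> components E A = {A}"
proof -
  assume s: "symg E" and cA: "connected_on E A"
  have A: "A \<in> components E A" using comp_char[OF s _ cA] by auto
  show ?thesis
  proof (rule set_eqI, rule iffI)
    fix D assume D: "D \<in> components E A"
    then obtain d where "d \<in> D" using comp_ne by blast
    then show "D \<in> {A}" using comp_disj[OF s D A] comp_sub[OF D] by auto
  qed (use A in auto)
qed

lemma comps_empty[simp]: "components E {} = {}"
  by (auto simp: components_def)

lemma ie_cong: "(\<forall>a\<in>A. \<forall>b\<in>A. E a b = E' a b) \<Longrightarrow> induced_edges E A = induced_edges E' A"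
  by (auto simp: induced_edges_def)

lemma conn_cong: "(\<forall>a\<in>A. \<forall>b\<in>A. E a b = E' a b) \<Longrightarrow> connected_on E A = connected_on E' A"
  unfolding connected_on_def by (drule ie_cong) (simp only:)

lemma comps_cong: "(\<forall>a\<in>A. \<forall>b\<in>A. E a b = E' a b) \<Longrightarrow> components E A = components E' A"
  unfolding components_def by (drule ie_cong) (simp only:)

lemma conn_univ:
  assumes s: "symg E" and k: "k \<in> A" and u: "\<forall>w\<in>A. w \<noteq> k \<longrightarrow> E k w"
  shows "connected_on E A"
proof -
  have "\<forall>a\<in>A. (k, a) \<in> (induced_edges E A)\<^sup>*"
  proof
    fix a assume a: "a \<in> A"
    show "(k, a) \<in> (induced_edges E A)\<^sup>*"
    proof (cases "a = k")
      case False then have "(k, a) \<in> induced_edges E A" using u a k by auto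
      then show ?thesis by auto
    qed simp
  qed
  have "\<forall>a\<in>A. \<forall>b\<in>A. (a, b) \<in> (induced_edges E A)\<^sup>*"
  proof (intro ballI)
    fix a b assume "a \<in> A" "b \<in> A"
    then have "(a, k) \<in> (induced_edges E A)\<^sup>*" "(k, b) \<in> (induced_edges E A)\<^sup>*"
      using rt_sym[OF s] \<open>\<forall>a\<in>A. (k, a) \<in> _\<close> by auto
    then show "(a, b) \<in> (induced_edges E A)\<^sup>*" by (rule rtrancl_trans)
  qed
  then show ?thesis using k by (auto simp: connected_on_def)
qed

lemma conn_has_nb:
  assumes "connected_on E A" "a \<in> A" "A \<noteq> {a}"
  shows "\<exists>b\<in>A. b \<noteq> a \<and> E a b"
proof -
  obtain b where b: "b \<in> A" "b \<noteq> a" using assms by auto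
  have "(a, b) \<in> (induced_edges E A)\<^sup>*" using assms b by (auto simp: connected_on_def)
  from path_exit[OF this, of "{a}"] b show ?thesis by auto
qed


definition par :: "('a \<Rightarrow> 'a option) \<Rightarrow> ('a \<times> 'a) set" where
  "par t = {(a, b). t a = Some b}"

lemma par_iff[simp]: "(a, b) \<in> par t \<longleftrightarrow> t a = Some b"
  by (simp add: par_def)

lemma subtree_iff: "y \<in> subtree t w \<longleftrightarrow> (y, w) \<in> (par t)\<^sup>*"
  by (simp add: subtree_def par_def)

definition rst :: "('a \<Rightarrow> 'a option) \<Rightarrow> 'a set \<Rightarrow> 'a \<Rightarrow> 'a \<Rightarrow> 'a option" where
  "rst t C c = (\<lambda>x. if x \<in> C \<and> x \<noteq> c then t x else None)"

definition stlevel where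
  "stlevel E S t r \<longleftrightarrow> connected_on E S \<and> r \<in> S \<and> t r = None \<and> (\<forall>x. x \<notin> S \<longrightarrow> t x = None) \<and>
     (\<forall>C\<in>components E (S - {r}). \<exists>c\<in>C. t c = Some r \<and> search_tree E C (rst t C c))"

lemma st_iff: "search_tree E S t \<longleftrightarrow> (\<exists>r. stlevel E S t r)"
  unfolding stlevel_def rst_def by (subst search_tree.simps) blast

lemma st_induct[consumes 1, case_names step]:
  assumes "search_tree E S t"
    and "\<And>S t r. stlevel E S t r \<Longrightarrow>
      (\<forall>C\<in>components E (S - {r}). \<exists>c\<in>C. t c = Some r \<and> search_tree E C (rst t C c) \<and> P C (rst t C c))
      \<Longrightarrow> P S t"
  shows "P S t"
  using assms(1)
proof (induction rule: search_tree.induct)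
  case (1 S r t)
  show ?case
  proof (rule assms(2))
    show "stlevel E S t r" unfolding stlevel_def rst_def using 1 by blast
    show "\<forall>C\<in>components E (S - {r}). \<exists>c\<in>C. t c = Some r \<and> search_tree E C (rst t C c) \<and> P C (rst t C c)"
      unfolding rst_def using 1(5) by blast
  qed
qed

lemma st_None: "search_tree E S t \<Longrightarrow> x \<notin> S \<Longrightarrow> t x = None"
proof -
  assume st: "search_tree E S t" and "x \<notin> S"
  from st have "\<exists>r. stlevel E S t r" by (simp only: st_iff)
  then obtain r where "stlevel E S t r" by (elim exE)
  then show ?thesis using \<open>x \<notin> S\<close> by (simp add: stlevel_def)
qed

lemma st_dom: "search_tree E S t \<Longrightarrow> t x = Some y \<Longrightarrow> x \<in> S"
  using st_None by force

lemma lev_st: "stlevel E S t r \<Longrightarrow> search_tree E S t"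
  by (rule st_iff[THEN iffD2, OF exI])

lemma rst_simp: "rst t C c x = (if x \<in> C \<and> x \<noteq> c then t x else None)"
  by (simp add: rst_def)

lemma lev_comp: "stlevel E S t r \<Longrightarrow> C \<in> components E (S - {r}) \<Longrightarrow>
   \<exists>c\<in>C. t c = Some r \<and> search_tree E C (rst t C c)"
  unfolding stlevel_def by blast

lemma st_par_all: "search_tree E S t \<Longrightarrow> symg E \<Longrightarrow> \<forall>y z. t y = Some z \<longrightarrow> z \<in> S"
proof (induction rule: st_induct)
  case (step S t r)
  show ?case
  proof (intro allI impI)
    fix y z assume yz: "t y = Some z"
    have lev: "stlevel E S t r" by fact
    have yS: "y \<in> S" using yz lev by (auto simp: stlevel_def)
    have "y \<noteq> r" using lev yz by (auto simp: stlevel_def)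
    then obtain C where C: "C \<in> components E (S - {r})" "y \<in> C" using comp_ex[of y "S - {r}"] yS by auto
    obtain c where c0: "c \<in> C" "t c = Some r" "search_tree E C (rst t C c)"
      "symg E \<longrightarrow> (\<forall>y z. rst t C c y = Some z \<longrightarrow> z \<in> C)" using bspec[OF step.IH C(1)] by (elim bexE conjE)
    note c = c0(1,2) c0(4)[rule_format, OF step.prems]
    show "z \<in> S"
    proof (cases "y = c")
      case True then show ?thesis using c yz lev by (auto simp: stlevel_def)
    next
      case False
      then have "rst t C c y = Some z" using C yz by (simp add: rst_def)
      then have "z \<in> C" using c by blast
      then show ?thesis using comp_sub[OF C(1)] by auto
    qed
  qed
qed

lemma st_par: "search_tree E S t \<Longrightarrow> symg E \<Longrightarrow> t y = Some z \<Longrightarrow> z \<in> S"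
  using st_par_all[of E S t] by simp

lemma st_root_all: "search_tree E S t \<Longrightarrow> symg E \<Longrightarrow> \<forall>y\<in>S. \<forall>z\<in>S. t y = None \<longrightarrow> t z = None \<longrightarrow> y = z"
proof (induction rule: st_induct)
  case (step S t r)
  have lev: "stlevel E S t r" by fact
  have key: "y = r" if yS: "y \<in> S" and yN: "t y = None" for y
  proof (rule ccontr)
    assume "y \<noteq> r"
    then obtain C where C: "C \<in> components E (S - {r})" "y \<in> C" using comp_ex[of y "S - {r}"] yS by auto
    obtain c where c0: "c \<in> C" "t c = Some r" "search_tree E C (rst t C c)"
      "symg E \<longrightarrow> (\<forall>y\<in>C. \<forall>z\<in>C. rst t C c y = None \<longrightarrow> rst t C c z = None \<longrightarrow> y = z)" using bspec[OF step.IH C(1)] by (elim bexE conjE)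
    note c = c0(1,2) c0(4)[rule_format, OF step.prems]
    show False
    proof (cases "y = c")
      case True then show ?thesis using c yN by simp
    next
      case False
      then have "rst t C c y = None" using C yN by (simp add: rst_def)
      moreover have "rst t C c c = None" by (simp add: rst_def)
      ultimately show False using c C False by blast
    qed
  qed
  show ?case using key by blast
qed

lemma st_nonroot: "stlevel E S t r \<Longrightarrow> symg E \<Longrightarrow> y \<in> S \<Longrightarrow> y \<noteq> r \<Longrightarrow> t y \<noteq> None"
proof
  assume lev: "stlevel E S t r" and s: "symg E" and yS: "y \<in> S" and yr: "y \<noteq> r" and yN: "t y = None"
  have rS: "r \<in> S" "t r = None" using lev by (auto simp: stlevel_def)
  have "y = r" using bspec[OF bspec[OF st_root_all[OF lev_st[OF lev] s] yS] rS(1)] yN rS(2) by simp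
  then show False using yr by simp
qed

lemma comp_child_unique:
  assumes lev: "stlevel E S t r" and s: "symg E" and C: "C \<in> components E (S - {r})" and c: "c \<in> C"
    and st: "search_tree E C (rst t C c)" and y: "y \<in> C" "t y = Some r"
  shows "y = c"
proof (rule ccontr)
  assume "y \<noteq> c"
  then have "rst t C c y = Some r" using y by (simp add: rst_def)
  then have "r \<in> C" by (rule st_par[OF st s])
  then show False using comp_sub[OF C] by auto
qed

lemma in_comp:
  assumes lev: "stlevel E S t r" and s: "symg E" and C: "C \<in> components E (S - {r})" and c: "c \<in> C"
    and tc: "t c = Some r" and st: "search_tree E C (rst t C c)"
    and p: "(y, w) \<in> (par t)\<^sup>*" and w: "w \<in> C"
  shows "y \<in> C \<and> (y, w) \<in> (par (rst t C c))\<^sup>*"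
  using p
proof (induction rule: converse_rtrancl_induct)
  case base then show ?case using w by simp
next
  case (step y y')
  have yy: "t y = Some y'" using step.hyps(1) by simp
  have stS: "search_tree E S t" using lev_st[OF lev] .
  have yS: "y \<in> S" using st_dom[OF stS yy] .
  have rN: "t r = None" using lev by (simp add: stlevel_def)
  have "y \<noteq> r" using yy rN by auto
  then obtain D where D: "D \<in> components E (S - {r})" "y \<in> D" using comp_ex[of y "S - {r}"] yS by auto
  obtain d where d: "d \<in> D" "t d = Some r" "search_tree E D (rst t D d)" using lev_comp[OF lev D(1)] by blast
  have y'C: "y' \<in> C" using step.IH by simp
  have "r \<notin> C" using comp_sub[OF C] by auto
  then have "y \<noteq> d" using d yy y'C by auto
  then have "rst t D d y = Some y'" using D yy by (simp add: rst_def)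
  then have y'D: "y' \<in> D" by (rule st_par[OF d(3) s])
  have DC: "D = C" using comp_disj[OF s D(1) C y'D y'C] .
  have "y \<noteq> c" using tc yy y'C \<open>r \<notin> C\<close> by auto
  then have "rst t C c y = Some y'" using D DC yy by (simp add: rst_def)
  then show ?case using D DC step.IH by (auto intro: converse_rtrancl_into_rtrancl)
qed

lemma par_rst_sub: "par (rst t C c) \<subseteq> par t"
  by (auto simp: rst_def split: if_splits)

lemma subtree_rst:
  assumes lev: "stlevel E S t r" and s: "symg E" and C: "C \<in> components E (S - {r})" and c: "c \<in> C"
    and tc: "t c = Some r" and st: "search_tree E C (rst t C c)" and w: "w \<in> C"
  shows "subtree t w = subtree (rst t C c) w"
proof
  show "subtree t w \<subseteq> subtree (rst t C c) w"
    using in_comp[OF lev s C c tc st _ w] by (auto simp: subtree_iff)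
  show "subtree (rst t C c) w \<subseteq> subtree t w"
    using rtrancl_mono[OF par_rst_sub, of t C c] by (auto simp: subtree_iff)
qed

lemma subtree_root_all: "search_tree E S t \<Longrightarrow> symg E \<Longrightarrow> \<forall>r. r \<in> S \<longrightarrow> t r = None \<longrightarrow> subtree t r = S"
proof (induction rule: st_induct)
  case (step S t r)
  have lev: "stlevel E S t r" by fact
  have stS: "search_tree E S t" using lev_st[OF lev] .
  have rS: "r \<in> S" "t r = None" using lev by (auto simp: stlevel_def)
  have main: "subtree t r = S"
  proof
    show "subtree t r \<subseteq> S"
    proof
      fix y assume "y \<in> subtree t r"
      then have "(y, r) \<in> (par t)\<^sup>*" by (simp add: subtree_iff)
      then show "y \<in> S"
      proof (cases rule: converse_rtranclE)
        case base then show ?thesis using rS by simp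
      next
        case (step z) then show ?thesis using st_dom[OF stS] by auto
      qed
    qed
    show "S \<subseteq> subtree t r"
    proof
      fix y assume yS: "y \<in> S"
      show "y \<in> subtree t r"
      proof (cases "y = r")
        case True then show ?thesis by (simp add: subtree_iff)
      next
        case False
        then obtain C where C: "C \<in> components E (S - {r})" "y \<in> C" using comp_ex[of y "S - {r}"] yS by auto
        obtain c where c0: "c \<in> C" "t c = Some r" "search_tree E C (rst t C c)"
          "symg E \<longrightarrow> (\<forall>r'. r' \<in> C \<longrightarrow> rst t C c r' = None \<longrightarrow> subtree (rst t C c) r' = C)" using bspec[OF step.IH C(1)] by (elim bexE conjE)
        have "subtree (rst t C c) c = C" using c0(1,4) step.prems by (simp add: rst_def)
        then have "(y, c) \<in> (par (rst t C c))\<^sup>*" using C(2) subtree_iff[of y "rst t C c" c] by simp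
        then have "(y, c) \<in> (par t)\<^sup>*" using rtrancl_mono[OF par_rst_sub, of t C c] by blast
        moreover have "(c, r) \<in> par t" using c0 by simp
        ultimately show ?thesis by (simp add: subtree_iff rtrancl_into_rtrancl)
      qed
    qed
  qed
  show ?case
  proof (intro allI impI)
    fix r' assume r': "r' \<in> S" "t r' = None"
    have "r' = r" using bspec[OF bspec[OF st_root_all[OF stS step.prems] r'(1)] rS(1)] r'(2) rS(2) by simp
    then show "subtree t r' = S" using main by simp
  qed
qed

lemma subtree_root: "stlevel E S t r \<Longrightarrow> symg E \<Longrightarrow> subtree t r = S"
proof -
  assume lev: "stlevel E S t r" and s: "symg E"
  have rS: "r \<in> S" "t r = None" using lev by (auto simp: stlevel_def)
  then show ?thesis using subtree_root_all[OF lev_st[OF lev] s] by simp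
qed

lemma acyc_all: "search_tree E S t \<Longrightarrow> symg E \<Longrightarrow> \<forall>y. (y, y) \<notin> (par t)\<^sup>+"
proof (induction rule: st_induct)
  case (step S t r)
  have lev: "stlevel E S t r" by fact
  have stS: "search_tree E S t" using lev_st[OF lev] .
  have rN: "t r = None" using lev by (simp add: stlevel_def)
  show ?case
  proof (intro allI notI)
    fix y assume "(y, y) \<in> (par t)\<^sup>+"
    from tranclD[OF this] obtain z where yz0: "(y, z) \<in> par t" and zy: "(z, y) \<in> (par t)\<^sup>*"
      by (elim exE conjE)
    have yz: "t y = Some z" using yz0 by simp
    have yS: "y \<in> S" using st_dom[OF stS yz] .
    have "y \<noteq> r" using yz rN by auto
    then obtain C where C: "C \<in> components E (S - {r})" "y \<in> C" using comp_ex[of y "S - {r}"] yS by auto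
    obtain c where c0: "c \<in> C" "t c = Some r" "search_tree E C (rst t C c)"
      "symg E \<longrightarrow> (\<forall>y. (y, y) \<notin> (par (rst t C c))\<^sup>+)" using bspec[OF step.IH C(1)] by (elim bexE conjE)
    have zC: "z \<in> C" and zy': "(z, y) \<in> (par (rst t C c))\<^sup>*"
      using in_comp[OF lev step.prems C(1) c0(1,2,3) zy C(2)] by auto
    have "r \<notin> C" using comp_sub[OF C(1)] by auto
    then have "y \<noteq> c" using c0 yz zC by auto
    then have "(y, z) \<in> par (rst t C c)" using yz C by (simp add: rst_def)
    then have "(y, y) \<in> (par (rst t C c))\<^sup>+" using zy' by (rule rtrancl_into_trancl2)
    then show False using c0(4) step.prems by blast
  qed
qed

lemma acyc: "search_tree E S t \<Longrightarrow> symg E \<Longrightarrow> (y, y) \<notin> (par t)\<^sup>+"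
  using acyc_all[of E S t] by simp


lemma st_lev_ex: "search_tree E S t \<Longrightarrow> \<exists>r. stlevel E S t r"
  by (simp only: st_iff)

lemma subtree_root': "search_tree E S t \<Longrightarrow> symg E \<Longrightarrow> r \<in> S \<Longrightarrow> t r = None \<Longrightarrow> subtree t r = S"
  using subtree_root_all[of E S t] by simp

lemma subtree_self[simp]: "w \<in> subtree t w"
  by (simp add: subtree_iff)

lemma subtree_trans: "y \<in> subtree t z \<Longrightarrow> z \<in> subtree t w \<Longrightarrow> y \<in> subtree t w"
  unfolding subtree_iff by (rule rtrancl_trans)

lemma subtree_child: "t y = Some w \<Longrightarrow> y \<in> subtree t w"
  by (simp add: subtree_iff r_into_rtrancl)

lemma subtree_child_sub: "t y = Some w \<Longrightarrow> subtree t y \<subseteq> subtree t w"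
  using subtree_trans subtree_child by fast

lemma subtree_unfold: "y \<in> subtree t w \<Longrightarrow> y \<noteq> w \<Longrightarrow> \<exists>c. t c = Some w \<and> y \<in> subtree t c"
proof -
  assume "y \<in> subtree t w" "y \<noteq> w"
  then have "(y, w) \<in> (par t)\<^sup>+" by (simp add: subtree_iff rtrancl_eq_or_trancl)
  from tranclD2[OF this] obtain c where "(y, c) \<in> (par t)\<^sup>*" "(c, w) \<in> par t" by (elim exE conjE)
  then show ?thesis by (auto simp: subtree_iff)
qed

lemma subtree_up: "y \<in> subtree t w \<Longrightarrow> y \<noteq> w \<Longrightarrow> \<exists>p. t y = Some p \<and> p \<in> subtree t w"
proof -
  assume "y \<in> subtree t w" "y \<noteq> w"
  then have "(y, w) \<in> (par t)\<^sup>+" by (simp add: subtree_iff rtrancl_eq_or_trancl)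
  from tranclD[OF this] obtain p where "(y, p) \<in> par t" "(p, w) \<in> (par t)\<^sup>*" by (elim exE conjE)
  then show ?thesis by (auto simp: subtree_iff)
qed

lemma subtree_leaf: "(\<forall>y. t y \<noteq> Some w) \<Longrightarrow> subtree t w = {w}"
proof -
  assume h: "\<forall>y. t y \<noteq> Some w"
  have "y = w" if "y \<in> subtree t w" for y
    using subtree_unfold[OF that] h by auto
  then show ?thesis by auto
qed

lemma acyc_antisym:
  assumes st: "search_tree E S t" and s: "symg E" and "y \<in> subtree t w" "w \<in> subtree t y"
  shows "y = w"
proof (rule ccontr)
  assume "y \<noteq> w"
  then have "(y, w) \<in> (par t)\<^sup>+" using assms(3) by (simp add: subtree_iff rtrancl_eq_or_trancl)
  moreover have "(w, y) \<in> (par t)\<^sup>*" using assms(4) by (simp add: subtree_iff)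
  ultimately have "(y, y) \<in> (par t)\<^sup>+" by (rule trancl_rtrancl_trancl)
  then show False using acyc[OF st s] by blast
qed

lemma acyc_par: "search_tree E S t \<Longrightarrow> symg E \<Longrightarrow> t y = Some z \<Longrightarrow> z \<notin> subtree t y"
proof
  assume st: "search_tree E S t" and s: "symg E" and yz: "t y = Some z" and zy: "z \<in> subtree t y"
  have "z = y" using acyc_antisym[OF st s zy subtree_child[of t y z, OF yz]] .
  moreover have "(y, z) \<in> (par t)\<^sup>+" using yz by (intro r_into_trancl) simp
  ultimately show False using acyc[OF st s] by simp
qed

lemma subtree_conn_all: "search_tree E S t \<Longrightarrow> symg E \<Longrightarrow> \<forall>w\<in>S. connected_on E (subtree t w)"
proof (induction rule: st_induct)
  case (step S t r)
  have lev: "stlevel E S t r" by fact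
  show ?case
  proof
    fix w assume wS: "w \<in> S"
    show "connected_on E (subtree t w)"
    proof (cases "w = r")
      case True then show ?thesis using subtree_root[OF lev step.prems] lev by (simp add: stlevel_def)
    next
      case False
      then obtain C where C: "C \<in> components E (S - {r})" "w \<in> C" using comp_ex[of w "S - {r}"] wS by auto
      obtain c where c0: "c \<in> C" "t c = Some r" "search_tree E C (rst t C c)"
        "symg E \<longrightarrow> (\<forall>w\<in>C. connected_on E (subtree (rst t C c) w))" using bspec[OF step.IH C(1)] by (elim bexE conjE)
      have "subtree t w = subtree (rst t C c) w" using subtree_rst[OF lev step.prems C(1) c0(1,2,3) C(2)] .
      then show ?thesis using c0(4) step.prems C(2) by simp
    qed
  qed
qed

lemma subtree_conn: "search_tree E S t \<Longrightarrow> symg E \<Longrightarrow> w \<in> S \<Longrightarrow> connected_on E (subtree t w)"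
  using subtree_conn_all[of E S t] by simp

lemma sib_all: "search_tree E S t \<Longrightarrow> symg E \<Longrightarrow>
  \<forall>y z p a b. t y = Some p \<longrightarrow> t z = Some p \<longrightarrow> y \<noteq> z \<longrightarrow> a \<in> subtree t y \<longrightarrow> b \<in> subtree t z \<longrightarrow> a \<noteq> b \<and> \<not> E a b"
proof (induction rule: st_induct)
  case (step S t r)
  have lev: "stlevel E S t r" by fact
  have s: "symg E" by fact
  have stS: "search_tree E S t" using lev_st[OF lev] .
  have rN: "t r = None" "r \<in> S" using lev by (auto simp: stlevel_def)
  show ?case
  proof (intro allI impI)
    fix y z p a b assume yp: "t y = Some p" and zp: "t z = Some p" and yz: "y \<noteq> z"
      and a: "a \<in> subtree t y" and b: "b \<in> subtree t z"
    have yS: "y \<in> S" using st_dom[OF stS yp] .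
    have zS: "z \<in> S" using st_dom[OF stS zp] .
    have "y \<noteq> r" using yp rN by auto
    then obtain C where C: "C \<in> components E (S - {r})" "y \<in> C" using comp_ex[of y "S - {r}"] yS by auto
    obtain c where c0: "c \<in> C" "t c = Some r" "search_tree E C (rst t C c)"
      "symg E \<longrightarrow> (\<forall>y z p a b. rst t C c y = Some p \<longrightarrow> rst t C c z = Some p \<longrightarrow> y \<noteq> z \<longrightarrow>
          a \<in> subtree (rst t C c) y \<longrightarrow> b \<in> subtree (rst t C c) z \<longrightarrow> a \<noteq> b \<and> \<not> E a b)"
      using bspec[OF step.IH C(1)] by (elim bexE conjE)
    have "z \<noteq> r" using zp rN by auto
    then obtain D where D: "D \<in> components E (S - {r})" "z \<in> D" using comp_ex[of z "S - {r}"] zS by auto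
    obtain d where d0: "d \<in> D" "t d = Some r" "search_tree E D (rst t D d)"
      using lev_comp[OF lev D(1)] by (elim bexE conjE)
    show "a \<noteq> b \<and> \<not> E a b"
    proof (cases "p = r")
      case True
      have yc: "y = c" using comp_child_unique[OF lev s C(1) c0(1) c0(3) C(2)] yp True by simp
      have zd: "z = d" using comp_child_unique[OF lev s D(1) d0(1) d0(3) D(2)] zp True by simp
      have "rst t C c c = None" by (simp add: rst_def)
      then have sy: "subtree t y = C"
        using subtree_rst[OF lev s C(1) c0(1,2,3) C(2)] subtree_root'[OF c0(3) s c0(1)] yc by simp
      have "rst t D d d = None" by (simp add: rst_def)
      then have sz: "subtree t z = D"
        using subtree_rst[OF lev s D(1) d0(1,2,3) D(2)] subtree_root'[OF d0(3) s d0(1)] zd by simp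
      have CD: "C \<noteq> D"
      proof
        assume "C = D"
        then have "z = c" using comp_child_unique[OF lev s C(1) c0(1) c0(3)] D(2) zp True by simp
        then show False using yc yz by simp
      qed
      have aC: "a \<in> C" using a sy by simp
      have bD: "b \<in> D" using b sz by simp
      have "a \<noteq> b" using comp_disj[OF s C(1) D(1) aC] bD CD by auto
      moreover have "\<not> E a b"
      proof
        assume "E a b"
        moreover have "b \<in> S - {r}" using bD comp_sub[OF D(1)] by auto
        ultimately have "b \<in> C" using comp_closed[OF s C(1) aC] by simp
        then show False using comp_disj[OF s C(1) D(1) _ bD] CD by auto
      qed
      ultimately show ?thesis by simp
    next
      case False
      have "y \<noteq> c" using yp c0(2) False by auto
      then have ry: "rst t C c y = Some p" using yp C(2) by (simp add: rst_def)
      then have pC: "p \<in> C" using st_par[OF c0(3) s] by simp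
      have zpr: "(z, p) \<in> (par t)\<^sup>*" using zp by (intro r_into_rtrancl) simp
      have "z \<in> C" using in_comp[OF lev s C(1) c0(1,2,3) zpr pC] by simp
      moreover have "z \<noteq> c" using zp c0(2) False by auto
      ultimately have rz: "rst t C c z = Some p" using zp by (simp add: rst_def)
      have "subtree t y = subtree (rst t C c) y" using subtree_rst[OF lev s C(1) c0(1,2,3) C(2)] .
      moreover have "subtree t z = subtree (rst t C c) z" using subtree_rst[OF lev s C(1) c0(1,2,3) \<open>z \<in> C\<close>] .
      ultimately show ?thesis using c0(4) s ry rz yz a b by blast
    qed
  qed
qed

lemma sib: "search_tree E S t \<Longrightarrow> symg E \<Longrightarrow> t y = Some p \<Longrightarrow> t z = Some p \<Longrightarrow> y \<noteq> z \<Longrightarrow>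
   a \<in> subtree t y \<Longrightarrow> b \<in> subtree t z \<Longrightarrow> a \<noteq> b \<and> \<not> E a b"
  using sib_all[of E S t] by blast


lemma st_cong_all: "search_tree E S t \<Longrightarrow> (\<forall>a\<in>S. \<forall>b\<in>S. E a b = E' a b) \<longrightarrow> search_tree E' S t"
proof (induction rule: st_induct)
  case (step S t r)
  have lev: "stlevel E S t r" by fact
  show ?case
  proof
    assume ag: "\<forall>a\<in>S. \<forall>b\<in>S. E a b = E' a b"
    have ag2: "\<forall>a\<in>S - {r}. \<forall>b\<in>S - {r}. E a b = E' a b" using ag by blast
    have cc: "components E (S - {r}) = components E' (S - {r})" using comps_cong[OF ag2] .
    have "stlevel E' S t r"
      unfolding stlevel_def
    proof (intro conjI)
      show "connected_on E' S" using lev conn_cong[OF ag] by (simp add: stlevel_def)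
      show "r \<in> S" "t r = None" "\<forall>x. x \<notin> S \<longrightarrow> t x = None" using lev by (auto simp: stlevel_def)
      show "\<forall>C\<in>components E' (S - {r}). \<exists>c\<in>C. t c = Some r \<and> search_tree E' C (rst t C c)"
      proof
        fix C assume "C \<in> components E' (S - {r})"
        then have C: "C \<in> components E (S - {r})" using cc by simp
        obtain c where c0: "c \<in> C" "t c = Some r" "search_tree E C (rst t C c)"
          "(\<forall>a\<in>C. \<forall>b\<in>C. E a b = E' a b) \<longrightarrow> search_tree E' C (rst t C c)"
          using bspec[OF step.IH C] by (elim bexE conjE)
        have "\<forall>a\<in>C. \<forall>b\<in>C. E a b = E' a b" using ag comp_sub[OF C] by blast
        then show "\<exists>c\<in>C. t c = Some r \<and> search_tree E' C (rst t C c)" using c0 by blast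
      qed
    qed
    then show "search_tree E' S t" by (rule lev_st)
  qed
qed

lemma st_cong: "search_tree E S t \<Longrightarrow> (\<forall>a\<in>S. \<forall>b\<in>S. E a b = E' a b) \<Longrightarrow> search_tree E' S t"
  using st_cong_all by blast

definition lift :: "'a \<Rightarrow> 'a set \<Rightarrow> ('a \<Rightarrow> 'a option) \<Rightarrow> 'a \<Rightarrow> 'a option" where
  "lift r S0 T = (\<lambda>y. if y \<in> S0 \<and> T y = None then Some r else T y)"

lemma lift_st:
  assumes s: "symg E" and cS: "connected_on E S" and r: "r \<in> S" and c0: "connected_on E (S - {r})"
    and st: "search_tree E (S - {r}) T"
  shows "search_tree E S (lift r (S - {r}) T)"
proof -
  obtain c where lev: "stlevel E (S - {r}) T c" using st_lev_ex[OF st] by (elim exE)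
  have cS0: "c \<in> S - {r}" "T c = None" using lev by (auto simp: stlevel_def)
  have comps: "components E (S - {r}) = {S - {r}}" using comps_single[OF s c0] .
  have rst_eq: "rst (lift r (S - {r}) T) (S - {r}) c = T"
  proof
    fix y show "rst (lift r (S - {r}) T) (S - {r}) c y = T y"
    proof (cases "y \<in> S - {r} \<and> y \<noteq> c")
      case True
      then have "T y \<noteq> None" using st_nonroot[OF lev s] by simp
      then show ?thesis using True by (simp add: rst_def lift_def)
    next
      case False
      then show ?thesis using cS0 st_None[OF st, of y] by (auto simp: rst_def)
    qed
  qed
  have "stlevel E S (lift r (S - {r}) T) r"
    unfolding stlevel_def
  proof (intro conjI)
    show "connected_on E S" "r \<in> S" by fact+
    show "lift r (S - {r}) T r = None" using st_None[OF st, of r] by (simp add: lift_def)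
    show "\<forall>x. x \<notin> S \<longrightarrow> lift r (S - {r}) T x = None" using st_None[OF st] by (simp add: lift_def)
    show "\<forall>C\<in>components E (S - {r}). \<exists>c\<in>C. lift r (S - {r}) T c = Some r \<and> search_tree E C (rst (lift r (S - {r}) T) C c)"
    proof
      fix C assume "C \<in> components E (S - {r})"
      then have C: "C = S - {r}" using comps by simp
      have "lift r (S - {r}) T c = Some r" using cS0 by (simp add: lift_def)
      then show "\<exists>c\<in>C. lift r (S - {r}) T c = Some r \<and> search_tree E C (rst (lift r (S - {r}) T) C c)"
        using C cS0 rst_eq st by auto
    qed
  qed
  then show ?thesis by (rule lev_st)
qed

lemma subtree_lift:
  assumes st: "search_tree E S0 T" and r: "r \<notin> S0" and w: "w \<noteq> r"
  shows "subtree (lift r S0 T) w = subtree T w"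
proof
  have sub: "par T \<subseteq> par (lift r S0 T)" by (auto simp: lift_def)
  show "subtree T w \<subseteq> subtree (lift r S0 T) w"
    using rtrancl_mono[OF sub] by (auto simp: subtree_iff)
  have rN: "T r = None" using st_None[OF st r] .
  show "subtree (lift r S0 T) w \<subseteq> subtree T w"
  proof
    fix y assume "y \<in> subtree (lift r S0 T) w"
    then have "(y, w) \<in> (par (lift r S0 T))\<^sup>*" by (simp add: subtree_iff)
    then have "(y, w) \<in> (par T)\<^sup>*"
    proof (induction rule: converse_rtrancl_induct)
      case base then show ?case by simp
    next
      case (step y y')
      show ?case
      proof (cases "T y = Some y'")
        case True then show ?thesis using step.IH by (simp add: converse_rtrancl_into_rtrancl)
      next
        case False
        then have "y' = r" using step.hyps(1) by (auto simp: lift_def split: if_splits)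
        then have "(r, w) \<in> (par T)\<^sup>*" using step.IH by simp
        then show ?thesis using w rN by (cases rule: converse_rtranclE) auto
      qed
    qed
    then show "y \<in> subtree T w" by (simp add: subtree_iff)
  qed
qed

lemma rotate_lift:
  assumes st: "search_tree E S0 T" and s: "symg E" and r: "r \<notin> S0" and vu: "T v = Some u"
  shows "rotate E (lift r S0 T) u v = lift r S0 (rotate E T u v)"
proof
  fix y
  have vS: "v \<in> S0" using st_dom[OF st vu] .
  have uS: "u \<in> S0" using st_par[OF st s vu] .
  have uv: "u \<noteq> v" using vu acyc[OF st s, of v] by (auto intro: r_into_trancl)
  show "rotate E (lift r S0 T) u v y = lift r S0 (rotate E T u v) y"
  proof (cases "y = u")
    case True then show ?thesis using uS uv by (simp add: rotate_def lift_def)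
  next
    case yu: False
    show ?thesis
    proof (cases "y = v")
      case True then show ?thesis using vS uS uv by (simp add: rotate_def lift_def)
    next
      case yv: False
      have l1: "lift r S0 T y = Some v \<longleftrightarrow> T y = Some v" using vS r by (auto simp: lift_def)
      show ?thesis
      proof (cases "T y = Some v")
        case True
        then have "y \<in> S0" using st_dom[OF st] by blast
        then have "y \<noteq> r" using r by auto
        then have sub: "subtree (lift r S0 T) y = subtree T y" using subtree_lift[OF st r] by simp
        show ?thesis using True yu yv l1 sub \<open>y \<in> S0\<close> by (simp add: rotate_def lift_def)
      next
        case False
        then show ?thesis using yu yv l1 by (simp add: rotate_def lift_def)
      qed
    qed
  qed
qed

lemma rot_adj_lift:
  assumes st1: "search_tree E S0 T1" and st2: "search_tree E S0 T2" and s: "symg E" and r: "r \<notin> S0"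
    and adj: "rot_adj E T1 T2"
  shows "rot_adj E (lift r S0 T1) (lift r S0 T2)"
proof -
  have lv: "lift r S0 T v = Some u" if "T v = Some u" for T v u
    using that by (simp add: lift_def)
  from adj show ?thesis
    unfolding rot_adj_def
  proof (elim disjE exE conjE)
    fix u v assume vu: "T1 v = Some u" and t2: "T2 = rotate E T1 u v"
    have "lift r S0 T2 = rotate E (lift r S0 T1) u v" using rotate_lift[OF st1 s r vu] t2 by simp
    then show "(\<exists>u v. lift r S0 T1 v = Some u \<and> lift r S0 T2 = rotate E (lift r S0 T1) u v) \<or>
      (\<exists>u v. lift r S0 T2 v = Some u \<and> lift r S0 T1 = rotate E (lift r S0 T2) u v)"
      using lv[of T1 v u, OF vu] by blast
  next
    fix u v assume vu: "T2 v = Some u" and t1: "T1 = rotate E T2 u v"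
    have "lift r S0 T1 = rotate E (lift r S0 T2) u v" using rotate_lift[OF st2 s r vu] t1 by simp
    then show "(\<exists>u v. lift r S0 T1 v = Some u \<and> lift r S0 T2 = rotate E (lift r S0 T1) u v) \<or>
      (\<exists>u v. lift r S0 T2 v = Some u \<and> lift r S0 T1 = rotate E (lift r S0 T2) u v)"
      using lv[of T2 v u, OF vu] by blast
  qed
qed


definition star :: "('a \<Rightarrow> 'a \<Rightarrow> bool) \<Rightarrow> 'a \<Rightarrow> bool" where
  "star H x \<longleftrightarrow> (\<forall>S'. x \<in> S' \<longrightarrow> connected_on H S' \<longrightarrow> S' \<noteq> {x} \<longrightarrow> connected_on H (S' - {x}))"

definition del :: "'a \<Rightarrow> ('a \<Rightarrow> 'a option) \<Rightarrow> 'a \<Rightarrow> 'a option" where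
  "del x T = (\<lambda>y. if y = x then None else if T y = Some x then T x else T y)"

lemma comp_remove_other:
  assumes s: "symg H" and C': "C' \<in> components H A" and C0: "C0 \<in> components H A" and ne: "C' \<noteq> C0" and x: "x \<in> C0"
  shows "C' \<in> components H (A - {x})"
proof (rule comp_char[OF s])
  have "x \<notin> C'" using comp_disj[OF s C' C0 _ x] ne by auto
  then show "C' \<subseteq> A - {x}" using comp_sub[OF C'] by auto
  show "connected_on H C'" using comp_conn[OF s C'] .
  show "\<forall>p\<in>C'. \<forall>q\<in>A - {x}. H p q \<longrightarrow> q \<in> C'" using comp_closed[OF s C'] by blast
qed

lemma comp_remove_main:
  assumes s: "symg H" and C0: "C0 \<in> components H A" and x: "x \<in> C0" and cc: "connected_on H (C0 - {x})"
  shows "C0 - {x} \<in> components H (A - {x})"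
proof (rule comp_char[OF s])
  show "C0 - {x} \<subseteq> A - {x}" using comp_sub[OF C0] by auto
  show "connected_on H (C0 - {x})" by fact
  show "\<forall>p\<in>C0 - {x}. \<forall>q\<in>A - {x}. H p q \<longrightarrow> q \<in> C0 - {x}" using comp_closed[OF s C0] by blast
qed

lemma comps_remove:
  assumes s: "symg H" and C0: "C0 \<in> components H A" and x: "x \<in> C0" and cc: "C0 = {x} \<or> connected_on H (C0 - {x})"
  shows "components H (A - {x}) = (components H A - {C0}) \<union> (if C0 = {x} then {} else {C0 - {x}})"
proof (rule set_eqI, rule iffI)
  fix D assume D: "D \<in> components H (A - {x})"
  obtain d where d: "d \<in> D" using comp_ne[OF D] by auto
  have dA: "d \<in> A" "d \<noteq> x" using d comp_sub[OF D] by auto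
  obtain C' where C': "C' \<in> components H A" "d \<in> C'" using comp_ex[OF dA(1)] by auto
  show "D \<in> (components H A - {C0}) \<union> (if C0 = {x} then {} else {C0 - {x}})"
  proof (cases "C' = C0")
    case True
    then have ne: "C0 \<noteq> {x}" using C' dA by auto
    then have "connected_on H (C0 - {x})" using cc by simp
    then have M: "C0 - {x} \<in> components H (A - {x})" using comp_remove_main[OF s C0 x] by simp
    have "d \<in> C0 - {x}" using C' True dA by simp
    then have "D = C0 - {x}" using comp_disj[OF s D M d] by simp
    then show ?thesis using ne by simp
  next
    case False
    have M: "C' \<in> components H (A - {x})" using comp_remove_other[OF s C'(1) C0 False x] .
    then have "D = C'" using comp_disj[OF s D M d C'(2)] by simp
    then show ?thesis using False C' by simp
  qed
next
  fix D assume D: "D \<in> (components H A - {C0}) \<union> (if C0 = {x} then {} else {C0 - {x}})"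
  show "D \<in> components H (A - {x})"
  proof (cases "D \<in> components H A - {C0}")
    case True
    then have "D \<in> components H A" "D \<noteq> C0" by auto
    then show ?thesis using comp_remove_other[OF s _ C0 _ x] by simp
  next
    case False
    then have "C0 \<noteq> {x}" "D = C0 - {x}" using D by (auto split: if_splits)
    then show ?thesis using cc comp_remove_main[OF s C0 x] by simp
  qed
qed

lemma lev_root_eq: "search_tree E S t \<Longrightarrow> symg E \<Longrightarrow> r \<in> S \<Longrightarrow> t r = None \<Longrightarrow> stlevel E S t r"
proof -
  assume st: "search_tree E S t" and s: "symg E" and r: "r \<in> S" "t r = None"
  obtain r' where lev: "stlevel E S t r'" using st_lev_ex[OF st] by (elim exE)
  have "r' \<in> S" "t r' = None" using lev by (auto simp: stlevel_def)
  then have "r' = r" using bspec[OF bspec[OF st_root_all[OF st s] r(1)]] r(2) by auto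
  then show ?thesis using lev by simp
qed

lemma del_st_all:
  assumes s: "symg H" and sx: "star H x"
  shows "search_tree H S T \<Longrightarrow> x \<in> S \<longrightarrow> S \<noteq> {x} \<longrightarrow> search_tree H (S - {x}) (del x T)"
proof (induction rule: st_induct)
  case (step S T r)
  have lev: "stlevel H S T r" by fact
  have stS: "search_tree H S T" using lev_st[OF lev] .
  have rS: "r \<in> S" "T r = None" "connected_on H S" "\<forall>y. y \<notin> S \<longrightarrow> T y = None" using lev by (auto simp: stlevel_def)
  show ?case
  proof (intro impI)
    assume xS: "x \<in> S" and Sx: "S \<noteq> {x}"
    have conn1: "connected_on H (S - {x})" using sx xS rS(3) Sx by (simp add: star_def)
    show "search_tree H (S - {x}) (del x T)"
    proof (cases "r = x")
      case True
      have comps: "components H (S - {r}) = {S - {x}}" using comps_single[OF s conn1] True by simp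
      obtain c where c: "c \<in> S - {x}" "T c = Some x" "search_tree H (S - {x}) (rst T (S - {x}) c)"
        using lev_comp[OF lev, of "S - {x}"] comps True by auto
      have "del x T = rst T (S - {x}) c"
      proof
        fix y show "del x T y = rst T (S - {x}) c y"
        proof (cases "y \<in> S - {x} \<and> y \<noteq> c")
          case yy: True
          have "T y \<noteq> Some x"
          proof
            assume "T y = Some x"
            then have "rst T (S - {x}) c y = Some x" using yy by (simp add: rst_def)
            then have "x \<in> S - {x}" by (rule st_par[OF c(3) s])
            then show False by simp
          qed
          then show ?thesis using yy by (auto simp: del_def rst_def)
        next
          case False
          then show ?thesis using c rS True by (auto simp: del_def rst_def)
        qed
      qed
      then show ?thesis using c(3) by simp
    next
      case rx: False
      have xSr: "x \<in> S - {r}" using xS rx by simp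
      obtain C0 where C0: "C0 \<in> components H (S - {r})" "x \<in> C0" using comp_ex[OF xSr] by auto
      obtain c0 where c0: "c0 \<in> C0" "T c0 = Some r" "search_tree H C0 (rst T C0 c0)"
        "x \<in> C0 \<longrightarrow> C0 \<noteq> {x} \<longrightarrow> search_tree H (C0 - {x}) (del x (rst T C0 c0))"
        using bspec[OF step.IH C0(1)] by (elim bexE conjE)
      have cc0: "C0 = {x} \<or> connected_on H (C0 - {x})" using sx C0(2) comp_conn[OF s C0(1)] by (auto simp: star_def)
      have eqS: "S - {x} - {r} = S - {r} - {x}" by auto
      have comps: "components H (S - {x} - {r}) = (components H (S - {r}) - {C0}) \<union> (if C0 = {x} then {} else {C0 - {x}})"
        using comps_remove[OF s C0 cc0] eqS by simp
      have "stlevel H (S - {x}) (del x T) r"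
        unfolding stlevel_def
      proof (intro conjI)
        show "connected_on H (S - {x})" by fact
        show "r \<in> S - {x}" using rS rx by simp
        show "del x T r = None" using rS rx by (simp add: del_def)
        show "\<forall>y. y \<notin> S - {x} \<longrightarrow> del x T y = None" using rS by (auto simp: del_def)
        show "\<forall>D\<in>components H (S - {x} - {r}). \<exists>c\<in>D. del x T c = Some r \<and> search_tree H D (rst (del x T) D c)"
        proof
          fix D assume D: "D \<in> components H (S - {x} - {r})"
          show "\<exists>c\<in>D. del x T c = Some r \<and> search_tree H D (rst (del x T) D c)"
          proof (cases "D \<in> components H (S - {r}) - {C0}")
            case True
            then have D1: "D \<in> components H (S - {r})" "D \<noteq> C0" by auto
            obtain d where d: "d \<in> D" "T d = Some r" "search_tree H D (rst T D d)"
              using lev_comp[OF lev D1(1)] by (elim bexE conjE)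
            have xD: "x \<notin> D" using comp_disj[OF s D1(1) C0(1) _ C0(2)] D1(2) by auto
            have "d \<noteq> x" using d xD by auto
            then have dd: "del x T d = Some r" using d rx by (simp add: del_def)
            have "rst (del x T) D d = rst T D d"
            proof
              fix y show "rst (del x T) D d y = rst T D d y"
              proof (cases "y \<in> D \<and> y \<noteq> d")
                case yy: True
                have "T y \<noteq> Some x"
                proof
                  assume "T y = Some x"
                  then have "rst T D d y = Some x" using yy by (simp add: rst_def)
                  then have "x \<in> D" using st_par[OF d(3) s] by simp
                  then show False using xD by simp
                qed
                moreover have "y \<noteq> x" using yy xD by auto
                ultimately show ?thesis using yy by (simp add: del_def rst_def)
              qed (auto simp: rst_def)
            qed
            then show ?thesis using d dd by auto
          next
            case False
            then have DC: "C0 \<noteq> {x}" "D = C0 - {x}" using D comps by (auto split: if_splits)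
            show ?thesis
            proof (cases "c0 = x")
              case False
              have "del x T c0 = Some r" using c0(2) False rx by (simp add: del_def)
              moreover have "rst (del x T) (C0 - {x}) c0 = del x (rst T C0 c0)"
              proof
                fix y show "rst (del x T) (C0 - {x}) c0 y = del x (rst T C0 c0) y"
                  using False C0(2) by (auto simp: del_def rst_def)
              qed
              moreover have "c0 \<in> D" using c0(1) False DC by simp
              ultimately show ?thesis using c0(4) C0(2) DC by auto
            next
              case True
              have r0: "rst T C0 x x = None" by (simp add: rst_def)
              have st0: "search_tree H C0 (rst T C0 x)" using c0(3) True by simp
              have lev0: "stlevel H C0 (rst T C0 x) x" using lev_root_eq[OF st0 s C0(2) r0] .
              have cc: "connected_on H (C0 - {x})" using cc0 DC by simp
              have comps0: "components H (C0 - {x}) = {C0 - {x}}" using comps_single[OF s cc] .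
              obtain c' where c': "c' \<in> C0 - {x}" "rst T C0 x c' = Some x"
                "search_tree H (C0 - {x}) (rst (rst T C0 x) (C0 - {x}) c')"
                using lev_comp[OF lev0, of "C0 - {x}"] comps0 by auto
              have Tc': "T c' = Some x" using c'(1,2) by (simp add: rst_def split: if_splits)
              have "del x T c' = Some r" using Tc' c'(1) c0(2) True by (simp add: del_def)
              moreover have "rst (del x T) (C0 - {x}) c' = rst (rst T C0 x) (C0 - {x}) c'"
              proof
                fix y show "rst (del x T) (C0 - {x}) c' y = rst (rst T C0 x) (C0 - {x}) c' y"
                proof (cases "y \<in> C0 - {x} \<and> y \<noteq> c'")
                  case yy: True
                  have "T y \<noteq> Some x"
                  proof
                    assume "T y = Some x"
                    then have "rst T C0 x y = Some x" using yy by (simp add: rst_def)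
                    then have "y = c'" using comp_child_unique[OF lev0 s _ c'(1) c'(3)] yy comps0 by blast
                    then show False using yy by simp
                  qed
                  then show ?thesis using yy by (simp add: del_def rst_def)
                qed (auto simp: rst_def)
              qed
              ultimately show ?thesis using c'(1,3) DC by auto
            qed
          qed
        qed
      qed
      then show ?thesis by (rule lev_st)
    qed
  qed
qed

lemma del_st: "symg H \<Longrightarrow> star H x \<Longrightarrow> search_tree H S T \<Longrightarrow> x \<in> S \<Longrightarrow> S \<noteq> {x} \<Longrightarrow> search_tree H (S - {x}) (del x T)"
  using del_st_all[of H x S T] by simp


definition anc :: "('a \<Rightarrow> 'a option) \<Rightarrow> 'a \<Rightarrow> 'a set" where
  "anc t y = {z. (y, z) \<in> (par t)\<^sup>+}"

lemma anc_None: "t y = None \<Longrightarrow> anc t y = {}"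
  by (auto simp: anc_def dest: tranclD)

lemma anc_Some: "t y = Some p \<Longrightarrow> anc t y = insert p (anc t p)"
proof -
  assume yp: "t y = Some p"
  show ?thesis
  proof (rule set_eqI, rule iffI)
    fix z assume "z \<in> anc t y"
    then have "(y, z) \<in> (par t)\<^sup>+" by (simp add: anc_def)
    from tranclD[OF this] obtain w where "(y, w) \<in> par t" "(w, z) \<in> (par t)\<^sup>*" by (elim exE conjE)
    then have "w = p" "(p, z) \<in> (par t)\<^sup>*" using yp by auto
    then show "z \<in> insert p (anc t p)" by (auto simp: anc_def rtrancl_eq_or_trancl)
  next
    fix z assume "z \<in> insert p (anc t p)"
    moreover have "(y, p) \<in> par t" using yp by simp
    ultimately show "z \<in> anc t y" by (auto simp: anc_def intro: trancl_into_trancl2)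
  qed
qed

lemma anc_sub: "search_tree E S t \<Longrightarrow> symg E \<Longrightarrow> anc t y \<subseteq> S"
proof
  fix z assume st: "search_tree E S t" and s: "symg E" and "z \<in> anc t y"
  then have "(y, z) \<in> (par t)\<^sup>+" by (simp add: anc_def)
  from tranclD2[OF this] obtain w where "(w, z) \<in> par t" by (elim exE conjE)
  then show "z \<in> S" using st_par[OF st s] by simp
qed

lemma anc_agree:
  assumes cl: "\<forall>a b. a \<in> N \<longrightarrow> t a = Some b \<longrightarrow> b \<in> N" and ag: "\<forall>a\<in>N. t2 a = t a" and y: "y \<in> N"
  shows "anc t2 y = anc t y"
proof -
  have cl2: "\<forall>a b. a \<in> N \<longrightarrow> t2 a = Some b \<longrightarrow> b \<in> N" using cl ag by auto
  have gen: "(y, z) \<in> (par t1)\<^sup>+ \<Longrightarrow> y \<in> N \<Longrightarrow> (y, z) \<in> (par t3)\<^sup>+ \<and> z \<in> N"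
    if c1: "\<forall>a b. a \<in> N \<longrightarrow> t1 a = Some b \<longrightarrow> b \<in> N" and a1: "\<forall>a\<in>N. t3 a = t1 a" for t1 t3 z y
  proof -
    assume p: "(y, z) \<in> (par t1)\<^sup>+" and yN: "y \<in> N"
    from p show ?thesis
    proof (induction rule: trancl_induct)
      case (base z) then show ?case using c1 a1 yN by (auto intro: r_into_trancl)
    next
      case (step a z)
      then have "a \<in> N" "(y, a) \<in> (par t3)\<^sup>+" by auto
      moreover have "t3 a = Some z" using step.hyps(2) a1 \<open>a \<in> N\<close> by simp
      ultimately show ?case using c1 step.hyps(2) by (auto intro: trancl_into_trancl)
    qed
  qed
  have ag2: "\<forall>a\<in>N. t a = t2 a" using ag by simp
  show ?thesis
    using gen[OF cl ag _ y] gen[OF cl2 ag2 _ y] by (auto simp: anc_def)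
qed

lemma rot_keep:
  assumes st: "search_tree E S t" and s: "symg E" and vu: "t v = Some u" and y: "y \<notin> subtree t u"
  shows "anc (rotate H t u v) y = anc t y"
proof (rule anc_agree[where N = "- subtree t u"])
  show "\<forall>a b. a \<in> - subtree t u \<longrightarrow> t a = Some b \<longrightarrow> b \<in> - subtree t u"
  proof (intro allI impI)
    fix a b assume a: "a \<in> - subtree t u" and ab: "t a = Some b"
    show "b \<in> - subtree t u"
    proof
      assume "b \<in> subtree t u"
      then have "a \<in> subtree t u" using subtree_trans[OF subtree_child[of t a b, OF ab]] by blast
      then show False using a by simp
    qed
  qed
  show "\<forall>a\<in>- subtree t u. rotate H t u v a = t a"
  proof
    fix a assume a: "a \<in> - subtree t u"
    have "a \<noteq> u" using a by auto
    moreover have "a \<noteq> v" using a subtree_child[of t v u, OF vu] by auto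
    moreover have "t a \<noteq> Some v"
    proof
      assume "t a = Some v"
      then have "a \<in> subtree t u" using subtree_trans[OF subtree_child[of t a v] subtree_child[of t v u, OF vu]] by blast
      then show False using a by simp
    qed
    ultimately show "rotate H t u v a = t a" by (simp add: rotate_def)
  qed
  show "y \<in> - subtree t u" using y by simp
qed

lemma rot_moved:
  assumes st: "search_tree E S t" and s: "symg E" and vu: "t v = Some u"
    and w': "t w' = Some v" "\<exists>z\<in>subtree t w'. H u z" and a: "a \<in> subtree t w'"
  shows "anc (rotate H t u v) a = anc t a"
proof -
  let ?t2 = "rotate H t u v"
  have vsub: "v \<in> subtree t u" using subtree_child[of t v u, OF vu] .
  have w'sub: "w' \<in> subtree t v" using subtree_child[of t w' v, OF w'(1)] .
  have u_not: "u \<notin> subtree t w'"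
  proof
    assume "u \<in> subtree t w'"
    then have "v \<in> subtree t w'" using vsub subtree_trans by fast
    then have "v = w'" using acyc_antisym[OF st s _ w'sub] by simp
    then show False using acyc_par[OF st s w'(1)] by simp
  qed
  have v_not: "v \<notin> subtree t w'" using acyc_par[OF st s w'(1)] .
  have uv: "u \<noteq> v" using acyc_par[OF st s vu] by auto
  have basew: "anc ?t2 w' = anc t w'"
  proof -
    have t2w': "?t2 w' = Some u" using w' uv u_not v_not by (auto simp: rotate_def)
    have t2u: "?t2 u = Some v" by (simp add: rotate_def)
    have t2v: "?t2 v = t u" using uv by (simp add: rotate_def)
    have A: "anc ?t2 w' = insert u (insert v (anc ?t2 v))" using anc_Some[of ?t2 w' u, OF t2w'] anc_Some[of ?t2 u v, OF t2u] by simp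
    have B: "anc t w' = insert v (insert u (anc t u))" using anc_Some[of t w' v, OF w'(1)] anc_Some[of t v u, OF vu] by simp
    have C: "anc ?t2 v = anc t u"
    proof (cases "t u")
      case None then show ?thesis using t2v anc_None[of ?t2 v] anc_None[of t u] by simp
    next
      case (Some p)
      have "p \<notin> subtree t u" using acyc_par[OF st s Some] .
      then have "anc ?t2 p = anc t p" using rot_keep[OF st s vu] by simp
      then show ?thesis using anc_Some[of ?t2 v p] t2v Some anc_Some[of t u p, OF Some] by simp
    qed
    show ?thesis using A B C by auto
  qed
  have "a \<in> subtree t w'" by fact
  then have "(a, w') \<in> (par t)\<^sup>*" by (simp add: subtree_iff)
  then show ?thesis
  proof (induction rule: converse_rtrancl_induct)
    case base then show ?case using basew by simp
  next
    case (step a a')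
    have aa': "t a = Some a'" using step.hyps(1) by simp
    have asub: "a \<in> subtree t w'" using step.hyps by (simp add: subtree_iff converse_rtrancl_into_rtrancl)
    have a'sub: "a' \<in> subtree t w'" using step.hyps(2) by (simp add: subtree_iff)
    have "a \<noteq> w'"
    proof
      assume "a = w'"
      then have "w' \<in> subtree t a'" using subtree_child[of t a a', OF aa'] by simp
      then have "a' = w'" using acyc_antisym[OF st s a'sub] by simp
      then show False using aa' \<open>a = w'\<close> acyc_par[OF st s aa'] by simp
    qed
    have "a \<noteq> u" using asub u_not by auto
    moreover have "a \<noteq> v" using asub v_not by auto
    moreover have "t a \<noteq> Some v"
    proof
      assume "t a = Some v"
      then have "a' = v" using aa' by simp
      then show False using a'sub v_not by simp
    qed
    ultimately have "?t2 a = t a" by (simp add: rotate_def)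
    then have "anc ?t2 a = insert a' (anc ?t2 a')" using anc_Some[of ?t2 a a'] aa' by simp
    also have "\<dots> = insert a' (anc t a')" using step.IH by simp
    also have "\<dots> = anc t a" using anc_Some[of t a a', OF aa'] by simp
    finally show ?case .
  qed
qed

lemma rot_anc_down:
  assumes st: "search_tree E S t" and s: "symg E" and vx: "t v = Some x"
  shows "anc (rotate H t x v) x = insert v (anc t x) \<and> v \<notin> anc t x"
proof -
  let ?t2 = "rotate H t x v"
  have xv: "x \<noteq> v" using acyc_par[OF st s vx] by auto
  have t2x: "?t2 x = Some v" by (simp add: rotate_def)
  have t2v: "?t2 v = t x" using xv by (simp add: rotate_def)
  have C: "anc ?t2 v = anc t x"
  proof (cases "t x")
    case None then show ?thesis using t2v anc_None[of ?t2 v] anc_None[of t x] by simp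
  next
    case (Some p)
    have "p \<notin> subtree t x" using acyc_par[OF st s Some] .
    then have "anc ?t2 p = anc t p" using rot_keep[OF st s vx] by simp
    then show ?thesis using anc_Some[of ?t2 v p] t2v Some anc_Some[of t x p, OF Some] by simp
  qed
  have "v \<notin> anc t x"
  proof
    assume "v \<in> anc t x"
    then have "(x, v) \<in> (par t)\<^sup>+" by (simp add: anc_def)
    moreover have "(v, x) \<in> par t" using vx by simp
    ultimately have "(x, x) \<in> (par t)\<^sup>+" by (rule trancl_into_trancl)
    then show False using acyc[OF st s] by simp
  qed
  then show ?thesis using anc_Some[of ?t2 x v, OF t2x] C by simp
qed

lemma rot_anc_up:
  assumes st: "search_tree E S t" and s: "symg E" and xu: "t x = Some u"
  shows "anc t x = insert u (anc (rotate H t u x) x) \<and> u \<notin> anc (rotate H t u x) x"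
proof -
  let ?t2 = "rotate H t u x"
  have xu': "x \<noteq> u" using acyc_par[OF st s xu] by auto
  have t2x: "?t2 x = t u" using xu' by (simp add: rotate_def)
  have C: "anc ?t2 x = anc t u"
  proof (cases "t u")
    case None then show ?thesis using t2x anc_None[of ?t2 x] anc_None[of t u] by simp
  next
    case (Some p)
    have "p \<notin> subtree t u" using acyc_par[OF st s Some] .
    then have "anc ?t2 p = anc t p" using rot_keep[OF st s xu] by simp
    then show ?thesis using anc_Some[of ?t2 x p] t2x Some anc_Some[of t u p, OF Some] by simp
  qed
  have "u \<notin> anc t u"
  proof
    assume "u \<in> anc t u"
    then show False using acyc[OF st s] by (simp add: anc_def)
  qed
  then show ?thesis using anc_Some[of t x u, OF xu] C by simp
qed

lemma rot_leaf:
  assumes "x \<noteq> u" "x \<noteq> v" "u \<noteq> v" "t v = Some u"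
  shows "(\<exists>y. rotate H t u v y = Some x) \<longleftrightarrow> (\<exists>y. t y = Some x)"
proof
  assume "\<exists>y. rotate H t u v y = Some x"
  then obtain y where y: "rotate H t u v y = Some x" by blast
  then show "\<exists>y. t y = Some x" using assms by (auto simp: rotate_def split: if_splits)
next
  assume "\<exists>y. t y = Some x"
  then obtain y where y: "t y = Some x" by blast
  show "\<exists>y. rotate H t u v y = Some x"
  proof (cases "y = u")
    case True then show ?thesis using y assms by (intro exI[of _ v]) (auto simp: rotate_def)
  next
    case False then show ?thesis using y assms by (intro exI[of _ y]) (auto simp: rotate_def)
  qed
qed

lemma del_subtree:
  assumes st: "search_tree E S t" and s: "symg E" and yx: "y \<noteq> x"
  shows "subtree (del x t) y = subtree t y - {x}"
proof
  have xx: "t x \<noteq> Some x" using acyc[OF st s, of x] by (auto intro: r_into_trancl)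
  show "subtree (del x t) y \<subseteq> subtree t y - {x}"
  proof
    fix z assume "z \<in> subtree (del x t) y"
    then have p: "(z, y) \<in> (par (del x t))\<^sup>*" by (simp add: subtree_iff)
    have "(z, y) \<in> (par t)\<^sup>*"
      using p
    proof (induction rule: converse_rtrancl_induct)
      case base then show ?case by simp
    next
      case (step a b)
      have "(a, b) \<in> (par t)\<^sup>*"
      proof (cases "t a = Some x")
        case True
        then have "t x = Some b" using step.hyps(1) by (auto simp: del_def split: if_splits)
        then show ?thesis using True by (meson par_iff r_into_rtrancl rtrancl_into_rtrancl)
      next
        case False
        then have "t a = Some b" using step.hyps(1) by (auto simp: del_def split: if_splits)
        then show ?thesis by (simp add: r_into_rtrancl)
      qed
      then show ?case using step.IH by (rule rtrancl_trans)
    qed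
    moreover have "z \<noteq> x"
    proof
      assume "z = x"
      then have "(x, y) \<in> (par (del x t))\<^sup>*" using p by simp
      then show False using yx by (cases rule: converse_rtranclE) (auto simp: del_def)
    qed
    ultimately show "z \<in> subtree t y - {x}" by (simp add: subtree_iff)
  qed
  show "subtree t y - {x} \<subseteq> subtree (del x t) y"
  proof
    fix z assume z: "z \<in> subtree t y - {x}"
    then have p: "(z, y) \<in> (par t)\<^sup>*" by (simp add: subtree_iff)
    have "(z \<noteq> x \<longrightarrow> (z, y) \<in> (par (del x t))\<^sup>*) \<and> (z = x \<longrightarrow> (\<forall>w. t w = Some x \<longrightarrow> (w, y) \<in> (par (del x t))\<^sup>*))"
      using p
    proof (induction rule: converse_rtrancl_induct)
      case base then show ?case using yx by simp
    next
      case (step a b)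
      have ab: "t a = Some b" using step.hyps(1) by simp
      show ?case
      proof (intro conjI impI allI)
        assume ax: "a \<noteq> x"
        show "(a, y) \<in> (par (del x t))\<^sup>*"
        proof (cases "b = x")
          case True
          then show ?thesis using step.IH ab by simp
        next
          case False
          then have "del x t a = Some b" using ab ax by (simp add: del_def)
          then show ?thesis using step.IH False by (simp add: converse_rtrancl_into_rtrancl)
        qed
      next
        fix w assume ax: "a = x" and wx: "t w = Some x"
        have bx: "b \<noteq> x" using ab ax xx by auto
        have "w \<noteq> x" using wx xx by auto
        then have "del x t w = Some b" using wx ab ax by (simp add: del_def)
        then show "(w, y) \<in> (par (del x t))\<^sup>*" using step.IH bx by (simp add: converse_rtrancl_into_rtrancl)
      qed
    qed
    then show "z \<in> subtree (del x t) y" using z by (simp add: subtree_iff)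
  qed
qed


locale GK =
  fixes V :: "'a set" and E :: "'a \<Rightarrow> 'a \<Rightarrow> bool" and K :: "'a set" and x :: 'a
  assumes sg: "simple_graph V E" and KV: "K \<subseteq> V" and Kne: "K \<noteq> {}"
    and univ: "\<forall>v\<in>K. universal V E v" and xV: "x \<notin> V"
begin

abbreviation "H \<equiv> add_vertex_edges E x K"
abbreviation "S' \<equiv> insert x V"

lemma E_in: "E a b \<Longrightarrow> a \<in> V \<and> b \<in> V \<and> a \<noteq> b \<and> E b a"
  using sg by (simp add: simple_graph_def)

lemma symE: "symg E"
  using E_in by (auto simp: symg_def)

lemma symH: "symg H"
  using E_in by (auto simp: symg_def add_vertex_edges_def)

lemma H_V: "a \<in> V \<Longrightarrow> b \<in> V \<Longrightarrow> H a b = E a b"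
  using xV by (auto simp: add_vertex_edges_def)

lemma H_x1: "H a x \<longleftrightarrow> a \<in> K"
  using xV E_in KV by (auto simp: add_vertex_edges_def)

lemma H_x2: "H x a \<longleftrightarrow> a \<in> K"
  using xV E_in KV by (auto simp: add_vertex_edges_def)

lemma E_H: "E a b \<Longrightarrow> H a b"
  by (simp add: add_vertex_edges_def)

lemma H_out: "H a b \<Longrightarrow> a \<in> S' \<and> b \<in> S'"
  using E_in[of a b] KV by (auto simp: add_vertex_edges_def)

lemma univE: "k \<in> K \<Longrightarrow> w \<in> V \<Longrightarrow> w \<noteq> k \<Longrightarrow> E k w \<and> E w k"
  using univ E_in[of k w] by (auto simp: universal_def)

lemma univH: "k \<in> K \<Longrightarrow> w \<in> V \<Longrightarrow> w \<noteq> k \<Longrightarrow> H k w \<and> H w k"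
  using univE E_H by blast

lemma starH: "star H x"
  unfolding star_def
proof (intro allI impI)
  fix A assume xA: "x \<in> A" and cA: "connected_on H A" and Ax: "A \<noteq> {x}"
  obtain b where b: "b \<in> A" "b \<noteq> x" "H x b" using conn_has_nb[OF cA xA Ax] by blast
  have bK: "b \<in> K" using b(3) H_x2 by simp
  have AV: "A - {x} \<subseteq> V"
  proof
    fix w assume w: "w \<in> A - {x}"
    have "A \<noteq> {w}" using xA w by auto
    then obtain c where "H w c" using conn_has_nb[OF cA] w by blast
    then show "w \<in> V" using H_out w by auto
  qed
  show "connected_on H (A - {x})"
  proof (rule conn_univ[OF symH, of b])
    show "b \<in> A - {x}" using b by simp
    show "\<forall>w\<in>A - {x}. w \<noteq> b \<longrightarrow> H b w" using univH[OF bK] AV by blast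
  qed
qed

lemma sub_S: "search_tree H S' t \<Longrightarrow> y \<in> S' \<Longrightarrow> subtree t y \<subseteq> S'"
proof
  fix z assume st: "search_tree H S' t" and y: "y \<in> S'" and z: "z \<in> subtree t y"
  show "z \<in> S'"
  proof (cases "z = y")
    case False
    then obtain p where "t z = Some p" using subtree_up[OF z] by blast
    then show ?thesis using st_dom[OF st] by blast
  qed (use y in simp)
qed

lemma child_K:
  assumes st: "search_tree H S' t" and y0: "t y0 = Some x"
  shows "\<exists>k\<in>K. k \<in> subtree t y0"
proof -
  have xS: "x \<in> S'" by simp
  have cc: "connected_on H (subtree t x)" using subtree_conn[OF st symH xS] .
  have y0x: "y0 \<in> subtree t x" using subtree_child[of t y0 x, OF y0] .
  have "(y0, x) \<in> (induced_edges H (subtree t x))\<^sup>*" using cc y0x by (simp add: connected_on_def)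
  moreover have "x \<notin> subtree t y0" using acyc_par[OF st symH y0] .
  ultimately obtain p q where pq: "p \<in> subtree t y0" "q \<notin> subtree t y0" "p \<in> subtree t x" "q \<in> subtree t x" "H p q"
    using path_exit[of y0 x H "subtree t x" "subtree t y0"] by auto
  show ?thesis
  proof (cases "q = x")
    case True
    then have "p \<in> K" using pq(5) H_x1 by simp
    then show ?thesis using pq(1) by blast
  next
    case False
    then obtain c where c: "t c = Some x" "q \<in> subtree t c" using subtree_unfold[OF pq(4)] by blast
    have "c \<noteq> y0" using c pq(2) by auto
    then have "\<not> H p q" using sib[OF st symH y0 c(1) _ pq(1) c(2)] by auto
    then show ?thesis using pq(5) by simp
  qed
qed

lemma child_unique:
  assumes st: "search_tree H S' t" and y0: "t y0 = Some x" and y: "t y = Some x"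
  shows "y = y0"
proof (rule ccontr)
  assume ne: "y \<noteq> y0"
  obtain k1 where k1: "k1 \<in> K" "k1 \<in> subtree t y0" using child_K[OF st y0] by blast
  obtain k2 where k2: "k2 \<in> K" "k2 \<in> subtree t y" using child_K[OF st y] by blast
  have "k1 \<noteq> k2 \<and> \<not> H k1 k2" using sib[OF st symH y0 y _ k1(2) k2(2)] ne by auto
  moreover have "k2 \<in> V" using k2 KV by auto
  ultimately show False using univH[OF k1(1)] by blast
qed

lemma no_sib:
  assumes st: "search_tree H S' t" and y0: "t y0 = Some x" and xw: "x \<in> subtree t w"
    and w: "t w = Some p" and w': "t w' = Some p"
  shows "w' = w"
proof (rule ccontr)
  assume ne: "w' \<noteq> w"
  obtain k where k: "k \<in> K" "k \<in> subtree t y0" using child_K[OF st y0] by blast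
  have "k \<in> subtree t w" using subtree_trans[OF subtree_trans[OF k(2) subtree_child[of t y0 x, OF y0]] xw] .
  then have A: "k \<noteq> w' \<and> \<not> H k w'" using sib[OF st symH w w' _ _ subtree_self[of w' t]] ne by auto
  have "x \<noteq> w'" using sib[OF st symH w w' _ xw subtree_self[of w' t]] ne by auto
  moreover have "w' \<in> S'" using st_dom[OF st w'] .
  ultimately have "w' \<in> V" by simp
  then show False using A univH[OF k(1)] by blast
qed

lemma uv_V:
  assumes st: "search_tree H S' t" and vu: "t v = Some u" and xu: "x \<noteq> u" and xv: "x \<noteq> v"
  shows "u \<in> V" "v \<in> V" "u \<noteq> v"
proof -
  show "u \<in> V" using st_par[OF st symH vu] xu by simp
  show "v \<in> V" using st_dom[OF st vu] xv by simp
  show "u \<noteq> v" using acyc_par[OF st symH vu] by auto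
qed

lemma cross_del:
  assumes st: "search_tree H S' t" and vu: "t v = Some u" and xu: "x \<noteq> u" and xv: "x \<noteq> v"
  shows "del x (rotate H t u v) = rotate E (del x t) u v"
proof
  fix y
  let ?t2 = "rotate H t u v"
  have uV: "u \<in> V" and vV: "v \<in> V" and uv: "u \<noteq> v" using uv_V[OF st vu xu xv] by auto
  show "del x ?t2 y = rotate E (del x t) u v y"
  proof (cases "y = x")
    case True then show ?thesis using xu xv by (simp add: del_def rotate_def)
  next
    case yx: False
    show ?thesis
    proof (cases "y = u")
      case True then show ?thesis using xu xv uv by (simp add: del_def rotate_def)
    next
      case yu: False
      show ?thesis
      proof (cases "y = v")
        case yv: True
        show ?thesis
        proof (cases "t u = Some x")
          case True
          have "t x \<noteq> Some v"
          proof
            assume xv': "t x = Some v"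
            have "v \<in> subtree t x"
              using subtree_trans[OF subtree_child[of t v u, OF vu] subtree_child[of t u x, OF True]] .
            then show False using acyc_par[OF st symH xv'] by simp
          qed
          then show ?thesis using yv True xu xv uv by (simp add: del_def rotate_def)
        next
          case False
          then show ?thesis using yv xu xv uv by (simp add: del_def rotate_def)
        qed
      next
        case yv: False
        show ?thesis
        proof (cases "t y = Some x")
          case True
          have yV: "y \<in> V" using st_dom[OF st True] yx by simp
          have t2y: "?t2 y = Some x" using True yu yv xv by (simp add: rotate_def)
          have L: "del x ?t2 y = ?t2 x" using t2y yx by (simp add: del_def)
          have R0: "del x t y = t x" using True yx by (simp add: del_def)
          have eq: "(\<exists>z\<in>subtree t x. H u z) = (\<exists>z\<in>subtree (del x t) y. E u z)" if txv: "t x = Some v"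
          proof -
            obtain k where k: "k \<in> K" "k \<in> subtree t y" using child_K[OF st True] by blast
            have ysub: "y \<in> subtree t u"
              using subtree_trans[OF subtree_child[of t y x, OF True] subtree_trans[OF subtree_child[of t x v, OF txv] subtree_child[of t v u, OF vu]]] .
            have "u \<notin> subtree t y" using acyc_antisym[OF st symH _ ysub] yu by auto
            then have ku: "k \<noteq> u" using k by auto
            have kV: "k \<in> V" using k KV by auto
            have Euk: "E u k" using univE[OF k(1) uV] ku by auto
            have kx: "k \<in> subtree t x" using subtree_trans[OF k(2) subtree_child[of t y x, OF True]] .
            have "k \<in> subtree (del x t) y" using del_subtree[OF st symH yx] k(2) kV xV by auto
            then show ?thesis using kx Euk E_H by blast
          qed
          show ?thesis
          proof (cases "t x = Some v")
            case True
            then show ?thesis using L R0 eq[OF True] yu yv xu xv by (simp add: rotate_def)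
          next
            case False
            then show ?thesis using L R0 yu yv xu xv by (simp add: rotate_def)
          qed
        next
          case False
          have R0: "del x t y = t y" using False yx by (simp add: del_def)
          have t2ne: "?t2 y \<noteq> Some x" using False xu yu yv by (simp add: rotate_def)
          have L: "del x ?t2 y = ?t2 y" using t2ne yx by (simp add: del_def)
          have eq: "(\<exists>z\<in>subtree t y. H u z) = (\<exists>z\<in>subtree (del x t) y. E u z)" if tyv: "t y = Some v"
          proof
            assume "\<exists>z\<in>subtree t y. H u z"
            then obtain z where z: "z \<in> subtree t y" "H u z" by blast
            have yS: "y \<in> S'" using st_dom[OF st tyv] .
            have dsub: "subtree (del x t) y = subtree t y - {x}" using del_subtree[OF st symH yx] .
            show "\<exists>z\<in>subtree (del x t) y. E u z"
            proof (cases "z = x")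
              case True
              then have uK: "u \<in> K" using z(2) H_x1 symH by (auto simp: symg_def)
              have yV: "y \<in> V" using yS yx by simp
              have "E u y" using univE[OF uK yV] yu by auto
              then show ?thesis using dsub yx by auto
            next
              case False
              have "z \<in> S'" using sub_S[OF st yS] z(1) by auto
              then have zV: "z \<in> V" using False by simp
              then have "E u z" using z(2) H_V[OF uV zV] by simp
              then show ?thesis using dsub z(1) False by auto
            qed
          next
            assume "\<exists>z\<in>subtree (del x t) y. E u z"
            then show "\<exists>z\<in>subtree t y. H u z" using del_subtree[OF st symH yx] E_H by auto
          qed
          show ?thesis
          proof (cases "t y = Some v")
            case True
            then show ?thesis using L R0 eq[OF True] yu yv by (simp add: rotate_def)
          next
            case False
            then show ?thesis using L R0 yu yv by (simp add: rotate_def)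
          qed
        qed
      qed
    qed
  qed
qed

lemma fiber_down:
  assumes st: "search_tree H S' t" and vx: "t v = Some x"
  shows "del x (rotate H t x v) = del x t"
proof
  fix y
  have xv: "x \<noteq> v" using acyc_par[OF st symH vx] by auto
  have xx: "t x \<noteq> Some x" using acyc[OF st symH, of x] by (auto intro: r_into_trancl)
  show "del x (rotate H t x v) y = del x t y"
  proof (cases "y = x \<or> y = v")
    case True then show ?thesis using xv xx vx by (auto simp: del_def rotate_def)
  next
    case False
    have "t y \<noteq> Some x" using child_unique[OF st vx, of y] False by auto
    then show ?thesis using False xv by (auto simp: del_def rotate_def)
  qed
qed

lemma fiber_up:
  assumes st: "search_tree H S' t" and xu: "t x = Some u"
  shows "del x (rotate H t u x) = del x t"
proof
  fix y
  have ux: "u \<noteq> x" using acyc_par[OF st symH xu] by auto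
  have uV: "u \<in> V" using st_par[OF st symH xu] ux by simp
  have ux': "t u \<noteq> Some x"
  proof
    assume "t u = Some x"
    then have "u \<in> subtree t x" using subtree_child by fast
    moreover have "x \<in> subtree t u" using subtree_child[of t x u, OF xu] .
    ultimately have "u = x" using acyc_antisym[OF st symH] by blast
    then show False using ux by simp
  qed
  have moved: "\<exists>z\<in>subtree t y. H u z" if yx: "t y = Some x" for y
  proof -
    obtain k where k: "k \<in> K" "k \<in> subtree t y" using child_K[OF st yx] by blast
    have ysub: "y \<in> subtree t u" using subtree_trans[OF subtree_child[of t y x, OF yx] subtree_child[of t x u, OF xu]] .
    have "u \<noteq> y" using yx ux' by auto
    then have "u \<notin> subtree t y" using acyc_antisym[OF st symH _ ysub] by auto
    then have "k \<noteq> u" using k by auto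
    then have "H u k" using univH[OF k(1) uV] by auto
    then show ?thesis using k by blast
  qed
  show "del x (rotate H t u x) y = del x t y"
  proof (cases "y = x")
    case True then show ?thesis by (simp add: del_def)
  next
    case yx: False
    show ?thesis
    proof (cases "y = u")
      case True then show ?thesis using ux ux' by (simp add: del_def rotate_def)
    next
      case yu: False
      show ?thesis
      proof (cases "t y = Some x")
        case True then show ?thesis using moved[OF True] yx yu ux xu by (simp add: del_def rotate_def)
      next
        case False then show ?thesis using yx yu ux by (simp add: del_def rotate_def)
      qed
    qed
  qed
qed

lemma cross_anc:
  assumes st: "search_tree H S' t" and vu: "t v = Some u" and xu: "x \<noteq> u" and xv: "x \<noteq> v"
    and y0: "t y0 = Some x"
  shows "anc (rotate H t u v) x = anc t x"
proof (cases "x \<in> subtree t u")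
  case False then show ?thesis using rot_keep[OF st symH vu] by simp
next
  case True
  have uV: "u \<in> V" using uv_V[OF st vu xu xv] by simp
  obtain w where w: "t w = Some u" "x \<in> subtree t w" using subtree_unfold[OF True] xu by blast
  have wv: "w = v" using no_sib[OF st y0 w(2) w(1) vu] by simp
  then obtain w' where w': "t w' = Some v" "x \<in> subtree t w'" using subtree_unfold[of x t v] w xv by blast
  obtain k where k: "k \<in> K" "k \<in> subtree t y0" using child_K[OF st y0] by blast
  have kw': "k \<in> subtree t w'" using subtree_trans[OF subtree_trans[OF k(2) subtree_child[of t y0 x, OF y0]] w'(2)] .
  have w'u: "w' \<in> subtree t u" using subtree_trans[OF subtree_child[of t w' v, OF w'(1)] subtree_child[of t v u, OF vu]] .
  have "u \<noteq> w'"
  proof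
    assume "u = w'"
    then have "t u = Some v" using w' by simp
    then have "u \<in> subtree t v" using subtree_child by fast
    moreover have "v \<in> subtree t u" using subtree_child[of t v u, OF vu] .
    ultimately have "u = v" using acyc_antisym[OF st symH] by blast
    then show False using acyc_par[OF st symH vu] by simp
  qed
  then have "u \<notin> subtree t w'" using acyc_antisym[OF st symH _ w'u] by auto
  then have "k \<noteq> u" using kw' by auto
  then have "H u k" using univH[OF k(1) uV] by auto
  then have "\<exists>z\<in>subtree t w'. H u z" using kw' by blast
  then show ?thesis using rot_moved[OF st symH vu w'(1) _ w'(2)] by simp
qed

lemma del_tree: "search_tree H S' t \<Longrightarrow> search_tree E V (del x t)"
proof -
  assume st: "search_tree H S' t"
  have "V \<noteq> {}" using Kne KV by auto
  then have ne: "S' \<noteq> {x}" using xV by auto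
  have "search_tree H (S' - {x}) (del x t)" using del_st[OF symH starH st _ ne] by simp
  then have "search_tree H V (del x t)" using xV by simp
  then show ?thesis using st_cong H_V by blast
qed

end


lemma single_st: "search_tree E {y} (\<lambda>_. None)"
proof -
  have "stlevel E {y} (\<lambda>_. None) y"
    by (simp add: stlevel_def connected_on_def)
  then show ?thesis by (rule lev_st)
qed

lemma conn1: "connected_on E {y}"
  by (simp add: connected_on_def)

lemma lift_st':
  assumes "symg E" "connected_on E S" "r \<in> S" "S0 = S - {r}" "connected_on E S0" "search_tree E S0 T"
  shows "search_tree E S (lift r S0 T)"
  using lift_st[of E S r T] assms by simp

lemma conn2: "symg E \<Longrightarrow> E a b \<Longrightarrow> connected_on E {a, b}"
  using conn_univ[of E a "{a, b}"] by (auto simp: symg_def)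

lemma conn3: "symg E \<Longrightarrow> E k a \<Longrightarrow> E k b \<Longrightarrow> connected_on E {a, k, b}"
  using conn_univ[of E k "{a, k, b}"] by auto

lemma p3_cycle:
  assumes s: "symg E" and d: "a \<noteq> k" "k \<noteq> b" "a \<noteq> b" and e: "E a k" "E k b" "\<not> E a b"
  shows "\<exists>t0 t1 t2 t3 t4. search_tree E {a, k, b} t0 \<and> search_tree E {a, k, b} t1 \<and> search_tree E {a, k, b} t2 \<and>
     search_tree E {a, k, b} t3 \<and> search_tree E {a, k, b} t4 \<and>
     rot_adj E t0 t1 \<and> rot_adj E t1 t2 \<and> rot_adj E t2 t3 \<and> rot_adj E t3 t4 \<and> rot_adj E t4 t0"
proof -
  have e2: "E k a" "E b k" "\<not> E b a" using e s by (auto simp: symg_def)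
  let ?P = "{a, k, b}"
  have cP: "connected_on E ?P" using conn3[OF s e2(1) e(2)] .
  define T1 where "T1 = (\<lambda>_. None)(a := Some k, b := Some k)"
  define T2 where "T2 = (\<lambda>_. None)(k := Some a, b := Some k)"
  define T3 where "T3 = (\<lambda>_. None)(b := Some a, k := Some b)"
  define T4 where "T4 = (\<lambda>_. None)(a := Some b, k := Some a)"
  define T5 where "T5 = (\<lambda>_. None)(k := Some b, a := Some k)"
  have st2: "search_tree E ?P T2"
  proof -
    have "search_tree E {k, b} (lift k {b} (\<lambda>_. None))"
      by (rule lift_st'[OF s conn2[OF s e(2)]]) (use d single_st conn1 in auto)
    then have "search_tree E ?P (lift a {k, b} (lift k {b} (\<lambda>_. None)))"
      using conn2[OF s e(2)] d by (intro lift_st'[OF s cP]) auto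
    moreover have "lift a {k, b} (lift k {b} (\<lambda>_. None)) = T2" using d by (auto simp: lift_def T2_def)
    ultimately show ?thesis by simp
  qed
  have st3: "search_tree E ?P T3"
  proof -
    have "search_tree E {k, b} (lift b {k} (\<lambda>_. None))"
      by (rule lift_st'[OF s conn2[OF s e(2)]]) (use d single_st conn1 in auto)
    then have "search_tree E ?P (lift a {k, b} (lift b {k} (\<lambda>_. None)))"
      using conn2[OF s e(2)] d by (intro lift_st'[OF s cP]) auto
    moreover have "lift a {k, b} (lift b {k} (\<lambda>_. None)) = T3" using d by (auto simp: lift_def T3_def)
    ultimately show ?thesis by simp
  qed
  have st4: "search_tree E ?P T4"
  proof -
    have "search_tree E {a, k} (lift a {k} (\<lambda>_. None))"
      by (rule lift_st'[OF s conn2[OF s e(1)]]) (use d single_st conn1 in auto)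
    then have "search_tree E ?P (lift b {a, k} (lift a {k} (\<lambda>_. None)))"
      using conn2[OF s e(1)] d by (intro lift_st'[OF s cP]) auto
    moreover have "lift b {a, k} (lift a {k} (\<lambda>_. None)) = T4" using d by (auto simp: lift_def T4_def)
    ultimately show ?thesis by simp
  qed
  have st5: "search_tree E ?P T5"
  proof -
    have "search_tree E {a, k} (lift k {a} (\<lambda>_. None))"
      by (rule lift_st'[OF s conn2[OF s e(1)]]) (use d single_st conn1 in auto)
    then have "search_tree E ?P (lift b {a, k} (lift k {a} (\<lambda>_. None)))"
      using conn2[OF s e(1)] d by (intro lift_st'[OF s cP]) auto
    moreover have "lift b {a, k} (lift k {a} (\<lambda>_. None)) = T5" using d by (auto simp: lift_def T5_def)
    ultimately show ?thesis by simp
  qed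
  have st1: "search_tree E ?P T1"
  proof -
    have ca: "{a} \<in> components E {a, b}"
      by (rule comp_char[OF s]) (use e in \<open>auto simp: connected_on_def\<close>)
    have cb: "{b} \<in> components E {a, b}"
      by (rule comp_char[OF s]) (use e2 in \<open>auto simp: connected_on_def\<close>)
    have comps: "components E {a, b} = {{a}, {b}}"
    proof (rule set_eqI, rule iffI)
      fix D assume D: "D \<in> components E {a, b}"
      obtain y where y: "y \<in> D" using comp_ne[OF D] by auto
      then have "y = a \<or> y = b" using comp_sub[OF D] by auto
      then show "D \<in> {{a}, {b}}" using comp_disj[OF s D ca y] comp_disj[OF s D cb y] by auto
    qed (use ca cb in auto)
    have r1: "rst T1 {a} a = (\<lambda>_. None)" by (auto simp: rst_def T1_def)
    have r2: "rst T1 {b} b = (\<lambda>_. None)" by (auto simp: rst_def T1_def)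
    have PK: "?P - {k} = {a, b}" using d by auto
    have "stlevel E ?P T1 k"
      unfolding stlevel_def
    proof (intro conjI)
      show "connected_on E ?P" by fact
      show "k \<in> ?P" by simp
      show "T1 k = None" using d by (simp add: T1_def)
      show "\<forall>x. x \<notin> ?P \<longrightarrow> T1 x = None" by (simp add: T1_def)
      show "\<forall>C\<in>components E (?P - {k}). \<exists>c\<in>C. T1 c = Some k \<and> search_tree E C (rst T1 C c)"
        unfolding PK comps using r1 r2 single_st d by (auto simp: T1_def)
    qed
    then show ?thesis by (rule lev_st)
  qed
  have l3: "subtree T3 k = {k}" by (rule subtree_leaf) (use d in \<open>auto simp: T3_def\<close>)
  have l5: "subtree T5 a = {a}" by (rule subtree_leaf) (use d in \<open>auto simp: T5_def\<close>)
  have r12: "rot_adj E T1 T2"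
  proof -
    have "rotate E T1 k a = T2" using d by (auto simp: rotate_def T1_def T2_def fun_eq_iff)
    moreover have "T1 a = Some k" using d by (simp add: T1_def)
    ultimately show ?thesis unfolding rot_adj_def by metis
  qed
  have r23: "rot_adj E T2 T3"
  proof -
    have "rotate E T2 k b = T3" using d by (auto simp: rotate_def T2_def T3_def fun_eq_iff)
    moreover have "T2 b = Some k" using d by (simp add: T2_def)
    ultimately show ?thesis unfolding rot_adj_def by metis
  qed
  have r34: "rot_adj E T3 T4"
  proof -
    have "rotate E T3 a b = T4"
    proof
      fix y show "rotate E T3 a b y = T4 y"
        using d l3 e(1) by (auto simp: rotate_def T3_def T4_def)
    qed
    moreover have "T3 b = Some a" using d by (simp add: T3_def)
    ultimately show ?thesis unfolding rot_adj_def by metis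
  qed
  have r45: "rot_adj E T4 T5"
  proof -
    have "rotate E T4 a k = T5" using d by (auto simp: rotate_def T4_def T5_def fun_eq_iff)
    moreover have "T4 k = Some a" using d by (simp add: T4_def)
    ultimately show ?thesis unfolding rot_adj_def by metis
  qed
  have r51: "rot_adj E T5 T1"
  proof -
    have "rotate E T5 b k = T1"
    proof
      fix y show "rotate E T5 b k y = T1 y"
        using d l5 e2(3) by (auto simp: rotate_def T5_def T1_def)
    qed
    moreover have "T5 k = Some b" using d by (simp add: T5_def)
    ultimately show ?thesis unfolding rot_adj_def by metis
  qed
  show ?thesis using st1 st2 st3 st4 st5 r12 r23 r34 r45 r51 by blast
qed


definition colorable :: "'b set \<Rightarrow> ('b \<Rightarrow> 'b \<Rightarrow> bool) \<Rightarrow> nat \<Rightarrow> bool" where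
  "colorable W A k \<longleftrightarrow> (\<exists>f. (\<forall>x\<in>W. f x < k) \<and> (\<forall>x\<in>W. \<forall>y\<in>W. A x y \<longrightarrow> f x \<noteq> (f y :: nat)))"

lemma chrom_eq: "chromatic_number W A = (LEAST k. colorable W A k)"
  by (simp add: chromatic_number_def colorable_def)

lemma colorable_ex:
  assumes "finite W" "\<forall>x\<in>W. \<not> A x x"
  shows "colorable W A (card W)"
proof -
  obtain h where h: "bij_betw h W {0..<card W}" using ex_bij_betw_finite_nat[OF assms(1)] by blast
  have "\<forall>x\<in>W. h x < card W" using h by (auto simp: bij_betw_def)
  moreover have "\<forall>x\<in>W. \<forall>y\<in>W. A x y \<longrightarrow> h x \<noteq> h y"
  proof (intro ballI impI)
    fix x y assume "x \<in> W" "y \<in> W" "A x y"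
    then have "x \<noteq> y" using assms(2) by auto
    then show "h x \<noteq> h y" using h \<open>x \<in> W\<close> \<open>y \<in> W\<close> by (auto simp: bij_betw_def inj_on_def)
  qed
  ultimately show ?thesis unfolding colorable_def by blast
qed

lemma chrom_colorable: "finite W \<Longrightarrow> \<forall>x\<in>W. \<not> A x x \<Longrightarrow> colorable W A (chromatic_number W A)"
  unfolding chrom_eq by (rule LeastI_ex) (use colorable_ex in blast)

lemma chrom_le: "colorable W A k \<Longrightarrow> chromatic_number W A \<le> k"
  unfolding chrom_eq by (rule Least_le)

lemma fin_trees:
  assumes fS: "finite S" and s: "symg E"
  shows "finite {t. search_tree E S t}"
proof (rule finite_subset)
  show "{t. search_tree E S t} \<subseteq> {f. \<forall>y. (y \<in> S \<longrightarrow> f y \<in> insert None (Some ` S)) \<and> (y \<notin> S \<longrightarrow> f y = None)}"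
  proof
    fix t assume "t \<in> {t. search_tree E S t}"
    then have st: "search_tree E S t" by simp
    have "\<forall>y. (y \<in> S \<longrightarrow> t y \<in> insert None (Some ` S)) \<and> (y \<notin> S \<longrightarrow> t y = None)"
    proof (intro allI conjI impI)
      fix y assume "y \<notin> S" then show "t y = None" using st_None[OF st] by simp
    next
      fix y show "t y \<in> insert None (Some ` S)"
      proof (cases "t y")
        case (Some z) then show ?thesis using st_par[OF st s Some] by simp
      qed simp
    qed
    then show "t \<in> {f. \<forall>y. (y \<in> S \<longrightarrow> f y \<in> insert None (Some ` S)) \<and> (y \<notin> S \<longrightarrow> f y = None)}" by simp
  qed
  show "finite {f. \<forall>y. (y \<in> S \<longrightarrow> f y \<in> insert None (Some ` S)) \<and> (y \<notin> S \<longrightarrow> f y = None)}"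
    by (rule finite_set_of_finite_funs) (use fS in auto)
qed

lemma rot_irrefl: "search_tree E S t \<Longrightarrow> symg E \<Longrightarrow> \<not> rot_adj E t t"
proof
  assume st: "search_tree E S t" and s: "symg E" and "rot_adj E t t"
  then obtain u v where vu: "t v = Some u" and tt: "t = rotate E t u v" unfolding rot_adj_def by blast
  have "t u = Some v" using tt by (metis rotate_def)
  then have "u \<in> subtree t v" using subtree_child by fast
  moreover have "v \<in> subtree t u" using subtree_child[of t v u, OF vu] .
  ultimately have "u = v" using acyc_antisym[OF st s] by blast
  then show False using acyc_par[OF st s vu] by simp
qed

lemma sub_gen: "search_tree E S t \<Longrightarrow> y \<in> S \<Longrightarrow> subtree t y \<subseteq> S"
proof
  fix z assume st: "search_tree E S t" and y: "y \<in> S" and z: "z \<in> subtree t y"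
  show "z \<in> S"
  proof (cases "z = y")
    case False
    then obtain p where "t z = Some p" using subtree_up[OF z] by blast
    then show ?thesis using st_dom[OF st] by blast
  qed (use y in simp)
qed

lemma mod_ne2:
  fixes a b s m :: nat
  assumes "a < m" "b < m" "a \<noteq> b"
  shows "(a + s) mod m \<noteq> (b + s) mod m"
proof
  assume eq: "(a + s) mod m = (b + s) mod m"
  show False
  proof (cases "a < b")
    case True
    then have "m dvd (b + s) - (a + s)" using eq mod_eq_dvd_iff_nat[of "a + s" "b + s" m] by simp
    then have "m dvd b - a" by simp
    moreover have "0 < b - a" "b - a < m" using True assms by auto
    ultimately show False using dvd_imp_le by fastforce
  next
    case False
    then have lt: "b < a" using assms by simp
    then have "m dvd (a + s) - (b + s)" using eq mod_eq_dvd_iff_nat[of "b + s" "a + s" m] by simp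
    then have "m dvd a - b" by simp
    moreover have "0 < a - b" "a - b < m" using lt assms by auto
    ultimately show False using dvd_imp_le by fastforce
  qed
qed

lemma mod_ne:
  fixes F d1 d2 m :: nat
  assumes "3 \<le> m" "d1 \<le> 2" "d2 \<le> 2" "d1 \<noteq> d2"
  shows "(F + d1) mod m \<noteq> (F + d2) mod m"
  using mod_ne2[of d1 m d2 F] assms by (simp add: add.commute)

context GK
begin

lemma finV: "finite V"
  using sg by (simp add: simple_graph_def)

lemma cycle_V:
  assumes a: "a \<in> V" and b: "b \<in> V" and ab: "a \<noteq> b" and nab: "\<not> E a b"
  shows "\<exists>t0 t1 t2 t3 t4. search_tree E V t0 \<and> search_tree E V t1 \<and> search_tree E V t2 \<and>
     search_tree E V t3 \<and> search_tree E V t4 \<and>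
     rot_adj E t0 t1 \<and> rot_adj E t1 t2 \<and> rot_adj E t2 t3 \<and> rot_adj E t3 t4 \<and> rot_adj E t4 t0"
proof -
  obtain k where k: "k \<in> K" using Kne by blast
  have aK: "a \<noteq> k" using univE[OF k b] nab univE[OF k a] ab by auto
  have bK: "b \<noteq> k" using univE[OF k a] nab ab by auto
  have Eak: "E a k" using univE[OF k a aK] by simp
  have Ekb: "E k b" using univE[OF k b bK] by simp
  have kV: "k \<in> V" using k KV by auto
  let ?P = "{a, k, b}"
  let ?Q = "\<lambda>S. \<exists>t0 t1 t2 t3 t4. search_tree E S t0 \<and> search_tree E S t1 \<and> search_tree E S t2 \<and>
     search_tree E S t3 \<and> search_tree E S t4 \<and>
     rot_adj E t0 t1 \<and> rot_adj E t1 t2 \<and> rot_adj E t2 t3 \<and> rot_adj E t3 t4 \<and> rot_adj E t4 t0"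
  have connS: "connected_on E S" if "k \<in> S" "S \<subseteq> V" for S
    by (rule conn_univ[OF symE that(1)]) (use univE[OF k] that(2) in blast)
  have base: "?Q ?P" using p3_cycle[OF symE aK bK[symmetric] ab Eak Ekb nab] by blast
  have ind: "finite F \<Longrightarrow> F \<subseteq> V - ?P \<Longrightarrow> ?Q (?P \<union> F)" for F
  proof (induction F rule: finite_induct)
    case empty then show ?case using base by simp
  next
    case (insert r F)
    have rV: "r \<in> V - ?P" using insert.prems by simp
    have IH: "?Q (?P \<union> F)" using insert.IH insert.prems by simp
    then obtain t0 t1 t2 t3 t4 where ts: "search_tree E (?P \<union> F) t0" "search_tree E (?P \<union> F) t1"
      "search_tree E (?P \<union> F) t2" "search_tree E (?P \<union> F) t3" "search_tree E (?P \<union> F) t4"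
      "rot_adj E t0 t1" "rot_adj E t1 t2" "rot_adj E t2 t3" "rot_adj E t3 t4" "rot_adj E t4 t0"
      by blast
    have S0eq: "({a, k, b} \<union> F) = ({a, k, b} \<union> insert r F) - {r}" using rV insert.hyps(2) by auto
    have rnot: "r \<notin> ({a, k, b} \<union> F)" using rV insert.hyps(2) by auto
    have cS: "connected_on E ({a, k, b} \<union> insert r F)" using connS[of "{a, k, b} \<union> insert r F"] insert.prems a b kV rV by auto
    have cS0: "connected_on E ({a, k, b} \<union> F)" using connS[of "{a, k, b} \<union> F"] insert.prems a b kV by auto
    have rS: "r \<in> ({a, k, b} \<union> insert r F)" by blast
    have L: "search_tree E ({a, k, b} \<union> insert r F) (lift r ({a, k, b} \<union> F) t)" if "search_tree E ({a, k, b} \<union> F) t" for t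
      using lift_st'[OF symE cS rS S0eq cS0 that] .
    have R: "rot_adj E (lift r ({a, k, b} \<union> F) t) (lift r ({a, k, b} \<union> F) t')" if "search_tree E ({a, k, b} \<union> F) t" "search_tree E ({a, k, b} \<union> F) t'" "rot_adj E t t'" for t t'
      using rot_adj_lift[OF that(1,2) symE rnot that(3)] .
    show ?case
      using L[OF ts(1)] L[OF ts(2)] L[OF ts(3)] L[OF ts(4)] L[OF ts(5)]
        R[OF ts(1,2,6)] R[OF ts(2,3,7)] R[OF ts(3,4,8)] R[OF ts(4,5,9)] R[OF ts(5,1,10)] by blast
  qed
  have "?Q (?P \<union> (V - ?P))" using ind[of "V - ?P"] finV by simp
  moreover have "?P \<union> (V - ?P) = V" using a b kV by auto
  ultimately show ?thesis by simp
qed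

lemma rotate_EH: "search_tree E V t \<Longrightarrow> t v = Some u \<Longrightarrow> rotate E t u v = rotate H t u v"
proof
  fix y assume st: "search_tree E V t" and vu: "t v = Some u"
  have uV: "u \<in> V" using st_par[OF st symE vu] .
  show "rotate E t u v y = rotate H t u v y"
  proof (cases "t y = Some v")
    case True
    have "y \<in> V" using st_dom[OF st True] .
    then have "subtree t y \<subseteq> V" using sub_gen[OF st] by simp
    then have "(\<exists>z\<in>subtree t y. E u z) = (\<exists>z\<in>subtree t y. H u z)" using H_V[OF uV] by auto
    then show ?thesis by (simp add: rotate_def)
  next
    case False then show ?thesis by (simp add: rotate_def)
  qed
qed

lemma rot_adj_EH: "search_tree E V t1 \<Longrightarrow> search_tree E V t2 \<Longrightarrow> rot_adj E t1 t2 \<Longrightarrow> rot_adj H t1 t2"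
  unfolding rot_adj_def using rotate_EH by metis

definition colf :: "(('a \<Rightarrow> 'a option) \<Rightarrow> nat) \<Rightarrow> nat \<Rightarrow> ('a \<Rightarrow> 'a option) \<Rightarrow> nat" where
  "colf f m t = (f (del x t) + (if \<exists>y. t y = Some x then Suc (card (anc t x) mod 2) else 0)) mod m"

lemma finite_anc: "search_tree H S' t \<Longrightarrow> finite (anc t y)"
  using anc_sub[of H S' t y] symH finV finite_subset by blast

lemma key:
  assumes st: "search_tree H S' t" and st2: "search_tree H S' (rotate H t u v)" and vu: "t v = Some u"
    and fb: "\<forall>t\<in>{t. search_tree E V t}. f t < m"
    and fp: "\<forall>t1\<in>{t. search_tree E V t}. \<forall>t2\<in>{t. search_tree E V t}. rot_adj E t1 t2 \<longrightarrow> f t1 \<noteq> f t2"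
    and m3: "3 \<le> m"
  shows "colf f m (rotate H t u v) \<noteq> colf f m t"
proof -
  let ?t2 = "rotate H t u v"
  have uv: "u \<noteq> v" using acyc_par[OF st symH vu] by auto
  have d1: "search_tree E V (del x t)" using del_tree[OF st] .
  have d2: "search_tree E V (del x ?t2)" using del_tree[OF st2] .
  let ?F = "f (del x t)"
  have Fm: "?F < m" using fb d1 by simp
  show ?thesis
  proof (cases "x = u")
    case True
    have vx: "t v = Some x" using vu True by simp
    have dd: "del x ?t2 = del x t" using fiber_down[OF st vx] True by simp
    obtain A where A: "anc ?t2 x = insert v (anc t x)" "v \<notin> anc t x" using rot_anc_down[OF st symH vx] True by auto
    have cA: "card (anc ?t2 x) = Suc (card (anc t x))" using A finite_anc[OF st] by simp
    have "colf f m t = (?F + Suc (card (anc t x) mod 2)) mod m"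
      using vx by (auto simp: colf_def)
    moreover have "colf f m ?t2 = (?F + (if \<exists>y. ?t2 y = Some x then Suc (Suc (card (anc t x)) mod 2) else 0)) mod m"
      using dd cA by (simp add: colf_def)
    moreover have "Suc (c mod 2) \<noteq> (if B then Suc (Suc c mod 2) else 0)" "Suc (c mod 2) \<le> 2"
        "(if B then Suc (Suc c mod 2) else 0) \<le> 2" for B and c :: nat
      by (cases B; presburger)+
    ultimately show ?thesis using mod_ne[OF m3, of "Suc (card (anc t x) mod 2)" "if \<exists>y. ?t2 y = Some x then Suc (Suc (card (anc t x)) mod 2) else 0" ?F]
      by auto
  next
    case xu: False
    show ?thesis
    proof (cases "x = v")
      case True
      have xu': "t x = Some u" using vu True by simp
      have dd: "del x ?t2 = del x t" using fiber_up[OF st xu'] True by simp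
      have A: "anc t x = insert u (anc ?t2 x)" "u \<notin> anc ?t2 x" using rot_anc_up[OF st symH xu'] True by auto
      have cA: "card (anc t x) = Suc (card (anc ?t2 x))" using A finite_anc[OF st2] by simp
      have nl: "?t2 u = Some x" using True by (simp add: rotate_def)
      have "colf f m ?t2 = (?F + Suc (card (anc ?t2 x) mod 2)) mod m"
        using nl dd by (auto simp: colf_def)
      moreover have "colf f m t = (?F + (if \<exists>y. t y = Some x then Suc (Suc (card (anc ?t2 x)) mod 2) else 0)) mod m"
        using cA by (simp add: colf_def)
      moreover have "Suc (c mod 2) \<noteq> (if B then Suc (Suc c mod 2) else 0)" "Suc (c mod 2) \<le> 2"
          "(if B then Suc (Suc c mod 2) else 0) \<le> 2" for B and c :: nat
        by (cases B; presburger)+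
      ultimately show ?thesis using mod_ne[OF m3, of "Suc (card (anc ?t2 x) mod 2)" "if \<exists>y. t y = Some x then Suc (Suc (card (anc ?t2 x)) mod 2) else 0" ?F]
        by auto
    next
      case xv: False
      have dd: "del x ?t2 = rotate E (del x t) u v" using cross_del[OF st vu xu xv] .
      have dv: "del x t v = Some u" using vu xu xv by (simp add: del_def)
      have radj: "rot_adj E (del x t) (del x ?t2)" using dd dv unfolding rot_adj_def by blast
      have "del x t \<in> {t. search_tree E V t}" "del x ?t2 \<in> {t. search_tree E V t}" using d1 d2 by simp_all
      then have fne0: "f (del x t) \<noteq> f (del x ?t2)" using fp radj by blast
      then have fne: "f (del x ?t2) \<noteq> ?F" by (rule not_sym)
      have F2m: "f (del x ?t2) < m" using fb d2 by simp
      have lf: "(\<exists>y. ?t2 y = Some x) = (\<exists>y. t y = Some x)" using rot_leaf[of x u v t H, OF xu xv uv vu] .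
      show ?thesis
      proof (cases "\<exists>y. t y = Some x")
        case True
        then obtain y0 where y0: "t y0 = Some x" by blast
        have "anc ?t2 x = anc t x" using cross_anc[OF st vu xu xv y0] .
        then show ?thesis using lf True mod_ne2[OF F2m Fm fne, of "Suc (card (anc t x) mod 2)"] by (simp add: colf_def)
      next
        case False
        then show ?thesis using lf mod_ne2[OF F2m Fm fne, of 0] by (simp add: colf_def)
      qed
    qed
  qed
qed

theorem main:
  assumes cV: "connected_on E V" and nc: "\<not> complete_graph V E"
  shows "chi_rotation_graph S' H = chi_rotation_graph V E"
proof -
  let ?W1 = "{t. search_tree E V t}"
  let ?W2 = "{t. search_tree H S' t}"
  have f1: "finite ?W1" using fin_trees[OF finV symE] .
  have f2: "finite ?W2" using fin_trees[OF _ symH] finV by simp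
  have irr1: "\<forall>t\<in>?W1. \<not> rot_adj E t t" using rot_irrefl symE by blast
  have irr2: "\<forall>t\<in>?W2. \<not> rot_adj H t t" using rot_irrefl symH by blast
  let ?m = "chromatic_number ?W1 (rot_adj E)"
  let ?n = "chromatic_number ?W2 (rot_adj H)"
  obtain f where fb: "\<forall>t\<in>?W1. f t < ?m" and fp: "\<forall>t1\<in>?W1. \<forall>t2\<in>?W1. rot_adj E t1 t2 \<longrightarrow> f t1 \<noteq> f t2"
    using chrom_colorable[of ?W1 "rot_adj E", OF f1 irr1] unfolding colorable_def by blast
  obtain g where gb: "\<forall>t\<in>?W2. g t < ?n" and gp: "\<forall>t1\<in>?W2. \<forall>t2\<in>?W2. rot_adj H t1 t2 \<longrightarrow> g t1 \<noteq> g t2"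
    using chrom_colorable[of ?W2 "rot_adj H", OF f2 irr2] unfolding colorable_def by blast
  obtain a b where ab: "a \<in> V" "b \<in> V" "a \<noteq> b" "\<not> E a b" using nc by (auto simp: complete_graph_def)
  obtain t0 t1 t2 t3 t4 where cyc: "search_tree E V t0" "search_tree E V t1" "search_tree E V t2"
     "search_tree E V t3" "search_tree E V t4"
     "rot_adj E t0 t1" "rot_adj E t1 t2" "rot_adj E t2 t3" "rot_adj E t3 t4" "rot_adj E t4 t0"
    using cycle_V[OF ab] by blast
  have m3: "3 \<le> ?m"
  proof (rule ccontr)
    assume "\<not> 3 \<le> ?m"
    then have lt: "?m \<le> 2" by simp
    have "f t0 < ?m" "f t1 < ?m" "f t2 < ?m" "f t3 < ?m" "f t4 < ?m" using fb cyc by auto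
    moreover have "f t0 \<noteq> f t1" "f t1 \<noteq> f t2" "f t2 \<noteq> f t3" "f t3 \<noteq> f t4" "f t4 \<noteq> f t0"
      using fp cyc by auto
    ultimately show False using lt by linarith
  qed
  have up: "?n \<le> ?m"
  proof (rule chrom_le)
    show "colorable ?W2 (rot_adj H) ?m"
      unfolding colorable_def
    proof (intro exI[of _ "colf f ?m"] conjI ballI impI)
      fix t assume "t \<in> ?W2"
      show "colf f ?m t < ?m" using m3 by (simp add: colf_def)
    next
      fix s1 s2 assume s1: "s1 \<in> ?W2" and s2: "s2 \<in> ?W2" and adj: "rot_adj H s1 s2"
      have "(\<exists>u v. s1 v = Some u \<and> s2 = rotate H s1 u v) \<or> (\<exists>u v. s2 v = Some u \<and> s1 = rotate H s2 u v)"
        using adj by (simp add: rot_adj_def)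
      then show "colf f ?m s1 \<noteq> colf f ?m s2"
      proof
        assume "\<exists>u v. s1 v = Some u \<and> s2 = rotate H s1 u v"
        then obtain u v where vu: "s1 v = Some u" and e: "s2 = rotate H s1 u v" by blast
        have a1: "search_tree H S' s1" using s1 by simp
        have a2: "search_tree H S' (rotate H s1 u v)" using s2 e by simp
        show "colf f ?m s1 \<noteq> colf f ?m s2"
          using key[of s1 u v f ?m, OF a1 a2 vu fb fp m3] e by auto
      next
        assume "\<exists>u v. s2 v = Some u \<and> s1 = rotate H s2 u v"
        then obtain u v where vu: "s2 v = Some u" and e: "s1 = rotate H s2 u v" by blast
        have a1: "search_tree H S' s2" using s2 by simp
        have a2: "search_tree H S' (rotate H s2 u v)" using s1 e by simp
        show "colf f ?m s1 \<noteq> colf f ?m s2"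
          using key[of s2 u v f ?m, OF a1 a2 vu fb fp m3] e by auto
      qed
    qed
  qed
  have down: "?m \<le> ?n"
  proof (rule chrom_le)
    obtain k where k: "k \<in> K" using Kne by blast
    have kV: "k \<in> V" using k KV by auto
    have cS: "connected_on H S'"
    proof (rule conn_univ[OF symH, of k])
      show "k \<in> S'" using kV by simp
      show "\<forall>w\<in>S'. w \<noteq> k \<longrightarrow> H k w" using univH[OF k] H_x1 k symH by (auto simp: symg_def)
    qed
    have agree: "\<forall>p\<in>V. \<forall>q\<in>V. E p q = H p q" using H_V by simp
    have cV': "connected_on H V" using conn_cong[OF agree] cV by simp
    have Veq: "V = S' - {x}" using xV by auto
    have L: "lift x V t \<in> ?W2" if "t \<in> ?W1" for t
    proof -
      have "search_tree H V t" using st_cong[OF _ agree] that by simp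
      then show ?thesis using lift_st'[OF symH cS _ Veq cV'] by simp
    qed
    show "colorable ?W1 (rot_adj E) ?n"
      unfolding colorable_def
    proof (intro exI[of _ "\<lambda>t. g (lift x V t)"] conjI ballI impI)
      fix t assume "t \<in> ?W1"
      then show "g (lift x V t) < ?n" using gb L by blast
    next
      fix s1 s2 assume s1: "s1 \<in> ?W1" and s2: "s2 \<in> ?W1" and adj: "rot_adj E s1 s2"
      have h1: "search_tree H V s1" using st_cong[OF _ agree] s1 by simp
      have h2: "search_tree H V s2" using st_cong[OF _ agree] s2 by simp
      have "rot_adj H s1 s2" using rot_adj_EH adj s1 s2 by simp
      then have "rot_adj H (lift x V s1) (lift x V s2)" using rot_adj_lift[OF h1 h2 symH xV] by simp
      then show "g (lift x V s1) \<noteq> g (lift x V s2)" using gp L[OF s1] L[OF s2] by blast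
    qed
  qed
  show ?thesis unfolding chi_rotation_graph_def using up down by simp
qed

end

theorem proposition3p2:
  fixes V :: "'a set" and E :: "'a \<Rightarrow> 'a \<Rightarrow> bool" and K :: "'a set" and x :: 'a
  assumes "simple_graph V E"
    and "connected_on E V"
    and "\<not> complete_graph V E"
    and "K \<noteq> {}" and "K \<subseteq> V" and "\<forall>v\<in>K. universal V E v"
    and "x \<notin> V"
  shows "chi_rotation_graph (insert x V) (add_vertex_edges E x K) = chi_rotation_graph V E"
proof -
  interpret GK V E K x
    by (unfold_locales) (use assms in auto)
  show ?thesis using main[OF assms(2) assms(3)] .
qed


end
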